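(* For every sufficiently large $n\in\mathbb{N}$ there exists a function $g:\mathbb{R}\to[-1,+1]$ such that (i) $g(z)=1$ for all $z\ge c$, where $c=\Phi^{-1}(1-3^{-2n}/4)$; and (ii) $\mathbb{E}_{z\sim\mathcal{N}_1}[g(z)z^k]=0$ for all $k\in\{1,\dots,n\}$.
   Context: $\Phi$ is the CDF of the standard one-dimensional Gaussian $\mathcal{N}_1$. *)

theory Defs
  imports "HOL-Probability.Probability"
begin

definition std_normal :: "real measure" where
  "std_normal = density lborel std_normal_density"

definition Phi :: "real \<Rightarrow> real" where
  "Phi = cdf std_normal"

text \<open>Inverse of Phi (Phi is a strictly increasing bijection onto (0,1)).\<close>
definition Phi_inv :: "real \<Rightarrow> real" where
  "Phi_inv p = (THE x. Phi x = p)"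

end

theory Submission
  imports Defs "HOL-Real_Asymp.Real_Asymp"
begin

definition polyfn :: "nat \<Rightarrow> (real \<Rightarrow> real) \<Rightarrow> bool" where
  "polyfn n f \<longleftrightarrow> (\<exists>p::real poly. degree p \<le> n \<and> (\<forall>x. f x = poly p x))"

lemma lagrange_interp:
  fixes t :: "nat \<Rightarrow> real"
  assumes inj: "inj_on t {..n}" and pf: "polyfn n f"
  shows "f x = (\<Sum>i\<le>n. f (t i) * (\<Prod>j\<in>{..n}-{i}. (x - t j) / (t i - t j)))"
proof -
  obtain p where dp: "degree p \<le> n" and fp: "\<And>x. f x = poly p x" using pf unfolding polyfn_def by blast
  define L where "L i = (\<Prod>j\<in>{..n}-{i}. smult (1 / (t i - t j)) [:- t j, 1:])" for i
  define Q where "Q = (\<Sum>i\<le>n. smult (f (t i)) (L i))"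
  have polyL: "poly (L i) x = (\<Prod>j\<in>{..n}-{i}. (x - t j) / (t i - t j))" for i x
    unfolding L_def by (simp add: poly_prod diff_divide_distrib)
  have degL: "degree (L i) \<le> n" if "i \<le> n" for i
  proof -
    have "degree (L i) \<le> sum (degree \<circ> (\<lambda>j. smult (1 / (t i - t j)) [:- t j, 1:])) ({..n}-{i})"
      unfolding L_def by (rule degree_prod_sum_le) simp
    also have "\<dots> \<le> sum (\<lambda>j. 1) ({..n}-{i})"
      by (intro sum_mono) (simp add: degree_smult_le le_trans[OF degree_smult_le])
    also have "\<dots> = n" using that by simp
    finally show ?thesis .
  qed
  have degQ: "degree Q \<le> n"
    unfolding Q_def by (intro degree_sum_le) (auto intro: le_trans[OF degree_smult_le] degL)
  have Lk: "poly (L i) (t k) = (if i = k then 1 else 0)" if "i \<le> n" "k \<le> n" for i k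
  proof (cases "i = k")
    case True
    have "poly (L i) (t k) = (\<Prod>j\<in>{..n}-{i}. 1)"
      unfolding polyL using True inj that
      by (intro prod.cong refl) (auto simp: inj_on_def)
    then show ?thesis using True by simp
  next
    case False
    have "poly (L i) (t k) = 0" unfolding polyL
      using False that by (intro prod_zero) auto
    then show ?thesis using False by simp
  qed
  have QA: "poly Q (t k) = poly p (t k)" if "k \<le> n" for k
  proof -
    have "poly Q (t k) = (\<Sum>i\<le>n. f (t i) * (if i = k then 1 else 0))"
      unfolding Q_def poly_sum by (intro sum.cong refl) (use that Lk in auto)
    also have "\<dots> = f (t k)" using that by (simp add: if_distrib cong: if_cong)
    finally show ?thesis using fp by simp
  qed
  have "p = Q"
  proof (rule poly_eqI_degree[where A = "t ` {..n}"])
    show "\<And>x. x \<in> t ` {..n} \<Longrightarrow> poly p x = poly Q x" using QA by auto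
    have "card (t ` {..n}) = Suc n" using card_image[OF inj] by simp
    then show "degree p < card (t ` {..n})" "degree Q < card (t ` {..n})" using dp degQ by auto
  qed
  then have "f x = poly Q x" using fp by simp
  also have "\<dots> = (\<Sum>i\<le>n. f (t i) * (\<Prod>j\<in>{..n}-{i}. (x - t j) / (t i - t j)))"
    unfolding Q_def poly_sum by (simp add: polyL)
  finally show ?thesis .
qed

definition P :: "(nat \<Rightarrow> real) \<Rightarrow> nat \<Rightarrow> real \<Rightarrow> real" where
  "P a n z = (\<Sum>k=1..n. a k * z ^ k)"

lemma polyfn_P_shift: "polyfn n (\<lambda>s. P a n (z - s))"
proof -
  define p where "p = (\<Sum>k=1..n. monom (a k) k)"
  have dp: "degree p \<le> n" unfolding p_def
    by (intro degree_sum_le) (auto intro: le_trans[OF degree_monom_le])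
  define q where "q = pcompose p [:z, -1:]"
  have "degree q \<le> n" unfolding q_def using dp by (simp add: degree_pcompose)
  moreover have "P a n (z - s) = poly q s" for s
    unfolding q_def P_def p_def by (simp add: poly_pcompose poly_sum poly_monom)
  ultimately show ?thesis unfolding polyfn_def by blast
qed

lemma P_extrap:
  fixes t :: "nat \<Rightarrow> real"
  assumes inj: "inj_on t {..n}"
  shows "P a n z = (\<Sum>i\<le>n. P a n (z - t i) * (\<Prod>j\<in>{..n}-{i}. t j / (t j - t i)))"
proof -
  have "P a n (z - 0) = (\<Sum>i\<le>n. P a n (z - t i) * (\<Prod>j\<in>{..n}-{i}. (0 - t j) / (t i - t j)))"
    by (rule lagrange_interp[OF inj polyfn_P_shift])
  also have "\<dots> = (\<Sum>i\<le>n. P a n (z - t i) * (\<Prod>j\<in>{..n}-{i}. t j / (t j - t i)))"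
    by (intro sum.cong refl arg_cong2[where f="(*)"] prod.cong) (auto simp: minus_divide_right)
  finally show ?thesis by simp
qed


lemma prod_absdiff_fact:
  assumes "i \<le> n"
  shows "(\<Prod>j\<in>{..n}-{i}. \<bar>real j - real i\<bar>) = fact i * fact (n - i)"
  using assms
proof (induction n rule: dec_induct)
  case base
  have "{..i}-{i} = {..<i}" by auto
  then have "(\<Prod>j\<in>{..i}-{i}. \<bar>real j - real i\<bar>) = (\<Prod>j\<in>{0..<i}. real (i - j))"
    by (auto simp: lessThan_atLeast0 of_nat_diff intro!: prod.cong)
  also have "\<dots> = fact i" by (simp add: fact_prod_rev)
  finally show ?case by simp
next
  case (step k)
  have "{..Suc k}-{i} = insert (Suc k) ({..k}-{i})" using step by auto
  then have "(\<Prod>j\<in>{..Suc k}-{i}. \<bar>real j - real i\<bar>)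
      = \<bar>real (Suc k) - real i\<bar> * (\<Prod>j\<in>{..k}-{i}. \<bar>real j - real i\<bar>)"
    by simp
  also have "\<dots> = real (Suc k - i) * (fact i * fact (k - i))"
    using step by (simp add: of_nat_diff)
  also have "\<dots> = fact i * fact (Suc k - i)"
    using step by (simp add: Suc_diff_le)
  finally show ?case .
qed

lemma prod_shift_fact:
  "(\<Prod>j\<in>{1..n}. real m + real j) = fact (m + n) / fact m"
proof (induction n)
  case 0 then show ?case by simp
next
  case (Suc n)
  have "(\<Prod>j\<in>{1..Suc n}. real m + real j) = (real m + real (Suc n)) * (\<Prod>j\<in>{1..n}. real m + real j)"
    by (simp add: prod.nat_ivl_Suc')
  also have "\<dots> = (real m + real (Suc n)) * (fact (m + n) / fact m)"
    using Suc by simp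
  also have "\<dots> = fact (Suc (m + n)) / fact m"
    by (simp only: fact_Suc) (simp add: algebra_simps)
  also have "\<dots> = fact (m + Suc n) / fact m" by simp
  finally show ?case .
qed

definition tn :: "real \<Rightarrow> nat \<Rightarrow> nat \<Rightarrow> real" where
  "tn c n i = c / 2 + real i * c / real n"

definition Lam :: "real \<Rightarrow> nat \<Rightarrow> nat \<Rightarrow> real" where
  "Lam c n i = (\<Prod>j\<in>{..n}-{i}. tn c n j / (tn c n j - tn c n i))"

lemma tn_inj: assumes "c > 0" "n \<ge> 1" shows "inj_on (tn c n) {..n}"
  using assms by (auto simp: inj_on_def tn_def field_simps)

lemma tn_nonneg: assumes "c > 0" shows "tn c n i \<ge> 0"
  using assms by (auto simp: tn_def)

lemma Lam_bound:
  assumes c: "c > 0" and n: "n \<ge> 1" and i: "i \<le> n" and m: "real n \<le> 2 * real m"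
  shows "\<bar>Lam c n i\<bar> \<le> real (n choose i) * real ((m + n) choose n)"
proof -
  define r where "r = real n / 2"
  have r: "r > 0" "r \<le> real m" using n m by (auto simp: r_def)
  have "Lam c n i = (\<Prod>j\<in>{..n}-{i}. (r + real j) / (real j - real i))"
    unfolding Lam_def
  proof (intro prod.cong refl)
    fix j assume "j \<in> {..n}-{i}"
    then have "real j \<noteq> real i" by auto
    then show "tn c n j / (tn c n j - tn c n i) = (r + real j) / (real j - real i)"
      using c n by (simp add: tn_def r_def field_simps)
  qed
  then have "\<bar>Lam c n i\<bar> = (\<Prod>j\<in>{..n}-{i}. (r + real j)) / (\<Prod>j\<in>{..n}-{i}. \<bar>real j - real i\<bar>)"
    using r by (simp add: abs_prod prod_dividef)
  also have "\<dots> = (\<Prod>j\<in>{..n}-{i}. (r + real j)) / (fact i * fact (n - i))"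
    using i by (simp add: prod_absdiff_fact)
  also have "(\<Prod>j\<in>{..n}-{i}. (r + real j)) \<le> fact (m + n) / fact m"
  proof -
    have fin: "finite {..n}" by simp
    have "(\<Prod>j\<in>{..n}. (r + real j)) = (r + real i) * (\<Prod>j\<in>{..n}-{i}. (r + real j))"
      using i by (subst prod.remove[OF fin, of i]) auto
    moreover have "{..n} = insert 0 {1..n}" by auto
    then have "(\<Prod>j\<in>{..n}. (r + real j)) = r * (\<Prod>j\<in>{1..n}. (r + real j))"
      by simp
    ultimately have eq: "(r + real i) * (\<Prod>j\<in>{..n}-{i}. (r + real j)) = r * (\<Prod>j\<in>{1..n}. (r + real j))"
      by simp
    have pos: "(\<Prod>j\<in>{..n}-{i}. (r + real j)) \<ge> 0" using r by (intro prod_nonneg) auto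
    have "(\<Prod>j\<in>{..n}-{i}. (r + real j)) \<le> (\<Prod>j\<in>{1..n}. (r + real j))"
    proof -
      have "r * (\<Prod>j\<in>{..n}-{i}. (r + real j)) \<le> (r + real i) * (\<Prod>j\<in>{..n}-{i}. (r + real j))"
        using pos by (intro mult_right_mono) auto
      then show ?thesis using eq r by (simp add: mult_le_cancel_left_pos)
    qed
    also have "\<dots> \<le> (\<Prod>j\<in>{1..n}. (real m + real j))"
      using r by (intro prod_mono) auto
    also have "\<dots> = fact (m + n) / fact m" by (rule prod_shift_fact)
    finally show ?thesis .
  qed
  then have "(\<Prod>j\<in>{..n}-{i}. (r + real j)) / (fact i * fact (n - i)) \<le> fact (m + n) / fact m / (fact i * fact (n - i))"
    by (intro divide_right_mono) auto
  also have "\<dots> = real (n choose i) * real ((m + n) choose n)"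
    using i by (simp add: binomial_fact field_simps)
  finally show ?thesis .
qed


lemma exp_half_bound: "exp (- (1/2::real)) \<le> 0.62"
proof -
  have "1 + 1/2 + (1/2)\<^sup>2/2 \<le> exp (1/2::real)" by (rule exp_lower_Taylor_quadratic) simp
  then have e: "exp (1/2::real) \<ge> 1.625" by (simp add: power2_eq_square)
  have "exp (- (1/2::real)) = inverse (exp (1/2))" by (simp add: exp_minus)
  also have "\<dots> \<le> inverse 1.625" using e by (intro le_imp_inverse_le) auto
  finally show ?thesis by simp
qed

lemma K_bound:
  assumes c: "c > 0" and n: "n \<ge> 1" and cn: "c\<^sup>2 \<ge> 4 * real n"
  shows "(\<Sum>i\<le>n. \<bar>Lam c n i\<bar> * exp (- tn c n i * c + (tn c n i)\<^sup>2 / 2))\<^sup>2 \<le> 8 * 0.8712 ^ n"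
proof -
  define m where "m = n - n div 2"
  have m1: "real n \<le> 2 * real m" and m2: "2 * m \<le> n + 1" unfolding m_def by linarith+
  define l where "l = c\<^sup>2 / (4 * real n)"
  have l1: "l \<ge> 1" using cn n by (simp add: l_def field_simps)
  define u where "u = exp (- l / 2)"
  have u0: "u > 0" by (simp add: u_def)
  have u1: "u \<le> 0.62"
  proof -
    have "u \<le> exp (- (1/2))" unfolding u_def using l1 by simp
    then show ?thesis using exp_half_bound by linarith
  qed
  define w where "w i = exp (- tn c n i * c + (tn c n i)\<^sup>2 / 2)" for i
  define S where "S = (\<Sum>i\<le>n. real (n choose i) * w i)"
  have "(\<Sum>i\<le>n. \<bar>Lam c n i\<bar> * w i) \<le> (\<Sum>i\<le>n. real (n choose i) * real ((m + n) choose n) * w i)"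
    by (intro sum_mono mult_right_mono Lam_bound[OF c n _ m1]) (auto simp: w_def)
  also have "\<dots> = real ((m + n) choose n) * S"
    by (simp add: S_def sum_distrib_left algebra_simps)
  also have "\<dots> \<le> 2 ^ (m + n) * S"
  proof -
    have "real ((m + n) choose n) \<le> real (2 ^ (m + n))" by (simp only: of_nat_le_iff binomial_le_pow2)
    moreover have "S \<ge> 0" by (auto simp: S_def w_def intro!: sum_nonneg)
    ultimately show ?thesis by (intro mult_right_mono) auto
  qed
  finally have K1: "(\<Sum>i\<le>n. \<bar>Lam c n i\<bar> * w i) \<le> 2 ^ (m + n) * S" .
  have wi: "w i \<le> exp (- c\<^sup>2 / 2) * (exp (-l/2) ^ i * exp (l/2) ^ (n - i) + exp (l/2) ^ i * exp (-l/2) ^ (n - i))"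
    if i: "i \<le> n" for i
  proof -
    define x where "x = real n / 2 - real i"
    have ct: "c - tn c n i = c / real n * x" using n by (simp add: tn_def x_def field_simps)
    have "real i \<le> real n" using i by simp
    then have xa: "\<bar>x\<bar> \<le> real n / 2" unfolding x_def abs_le_iff by linarith
    have "(c - tn c n i)\<^sup>2 / 2 = c\<^sup>2 / real n ^ 2 * x\<^sup>2 / 2" by (simp add: ct power_mult_distrib power_divide)
    also have "\<dots> \<le> c\<^sup>2 / real n ^ 2 * (\<bar>x\<bar> * (real n / 2)) / 2"
    proof -
      have "x\<^sup>2 = \<bar>x\<bar> * \<bar>x\<bar>" by (simp add: power2_eq_square)
      also have "\<dots> \<le> \<bar>x\<bar> * (real n / 2)" using xa by (intro mult_left_mono) auto
      finally have "x\<^sup>2 \<le> \<bar>x\<bar> * (real n / 2)" .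
      then show ?thesis by (intro divide_right_mono mult_left_mono) auto
    qed
    also have "\<dots> = l * \<bar>x\<bar>" using n by (simp add: l_def power2_eq_square field_simps)
    finally have q: "(c - tn c n i)\<^sup>2 / 2 \<le> l * \<bar>x\<bar>" .
    have "w i = exp (- c\<^sup>2 / 2) * exp ((c - tn c n i)\<^sup>2 / 2)"
      unfolding w_def by (simp add: exp_add[symmetric] power2_eq_square algebra_simps)
    also have "\<dots> \<le> exp (- c\<^sup>2 / 2) * exp (l * \<bar>x\<bar>)" using q by simp
    also have "exp (l * \<bar>x\<bar>) \<le> exp (l * x) + exp (- (l * x))"
      by (cases "x \<ge> 0") (auto simp: add_increasing add_increasing2)
    also have "exp (l * x) = exp (-l/2) ^ i * exp (l/2) ^ (n - i)"
      using i by (simp add: x_def exp_of_nat_mult[symmetric] exp_add[symmetric] of_nat_diff algebra_simps)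
    also have "exp (- (l * x)) = exp (l/2) ^ i * exp (-l/2) ^ (n - i)"
      using i by (simp add: x_def exp_of_nat_mult[symmetric] exp_add[symmetric] of_nat_diff algebra_simps)
        (simp add: field_simps)
    finally show ?thesis by simp
  qed
  have "S \<le> (\<Sum>i\<le>n. real (n choose i) * (exp (- c\<^sup>2 / 2) * (exp (-l/2) ^ i * exp (l/2) ^ (n - i) + exp (l/2) ^ i * exp (-l/2) ^ (n - i))))"
    unfolding S_def by (intro sum_mono mult_left_mono wi) auto
  also have "\<dots> = exp (- c\<^sup>2 / 2) * ((\<Sum>i\<le>n. real (n choose i) * (exp (-l/2) ^ i * exp (l/2) ^ (n - i)))
        + (\<Sum>i\<le>n. real (n choose i) * (exp (l/2) ^ i * exp (-l/2) ^ (n - i))))"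
    by (simp only: sum_distrib_left sum.distrib[symmetric] distrib_left mult.left_commute)
  also have "\<dots> = exp (- c\<^sup>2 / 2) * ((exp (-l/2) + exp (l/2)) ^ n + (exp (l/2) + exp (-l/2)) ^ n)"
    by (simp only: binomial_ring mult.assoc)
  also have "\<dots> = 2 * u ^ (4 * n) * (u + 1 / u) ^ n"
  proof -
    have e1: "real (4 * n) * (- l / 2) = - c\<^sup>2 / 2" using n by (simp add: l_def field_simps)
    have "u ^ (4 * n) = exp (real (4 * n) * (- l / 2))" unfolding u_def by (rule exp_of_nat_mult[symmetric])
    then have "exp (- c\<^sup>2 / 2) = u ^ (4 * n)" by (simp only: e1)
    moreover have "exp (l / 2) = 1 / u"
    proof -
      have "exp (l/2) * u = 1" unfolding u_def by (simp add: exp_add[symmetric])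
      then show ?thesis using u0 by (simp add: eq_divide_eq)
    qed
    moreover have "exp (- l / 2) = u" by (simp add: u_def)
    ultimately show ?thesis by (simp only:) (simp add: add.commute)
  qed
  finally have S1: "S \<le> 2 * u ^ (4 * n) * (u + 1 / u) ^ n" .
  have "u ^ (4 * n) * (u + 1 / u) ^ n = (u ^ 3 + u ^ 5) ^ n"
  proof -
    have "u ^ (4 * n) * (u + 1 / u) ^ n = (u ^ 4 * (u + 1 / u)) ^ n" by (simp add: power_mult power_mult_distrib)
    also have "u ^ 4 * (u + 1 / u) = u ^ 3 + u ^ 5" using u0 by (simp add: field_simps) (simp add: eval_nat_numeral)
    finally show ?thesis .
  qed
  then have S2: "S \<le> 2 * (u ^ 3 + u ^ 5) ^ n" using S1 by simp
  define K where "K = (\<Sum>i\<le>n. \<bar>Lam c n i\<bar> * w i)"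
  have K0: "K \<ge> 0" by (auto simp: K_def w_def intro!: sum_nonneg)
  have K2: "K \<le> 2 ^ (m + 1) * (2 * (u ^ 3 + u ^ 5)) ^ n"
  proof -
    have "K \<le> 2 ^ (m + n) * (2 * (u ^ 3 + u ^ 5) ^ n)"
      unfolding K_def by (rule order_trans[OF K1 mult_left_mono[OF S2]]) simp
    also have "\<dots> = 2 ^ (m + 1) * (2 * (u ^ 3 + u ^ 5)) ^ n"
      by (simp only: power_add power_mult_distrib power_one_right mult.assoc mult.commute mult.left_commute)
    finally show ?thesis .
  qed
  have ub: "2 * (u ^ 3 + u ^ 5) \<le> 0.66"
  proof -
    have "u ^ 3 \<le> 0.62 ^ 3" "u ^ 5 \<le> 0.62 ^ 5" using u0 u1 by (intro power_mono; simp)+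
    then show ?thesis by (simp add: power_divide)
  qed
  have "K \<le> 2 ^ (m + 1) * 0.66 ^ n"
  proof (rule order_trans[OF K2 mult_left_mono[OF power_mono[OF ub]]])
    show "0 \<le> 2 * (u ^ 3 + u ^ 5)" using u0 by simp
  qed simp
  then have "K\<^sup>2 \<le> (2 ^ (m + 1) * 0.66 ^ n)\<^sup>2" using K0 by (intro power_mono) auto
  also have "\<dots> = 4 * 4 ^ m * 0.4356 ^ n"
  proof -
    have "(2 ^ (m + 1) * (0.66::real) ^ n)\<^sup>2 = (2 ^ (m + 1))\<^sup>2 * ((0.66::real) ^ n)\<^sup>2"
      by (rule power_mult_distrib)
    also have "((0.66::real) ^ n)\<^sup>2 = 0.4356 ^ n"
      by (simp add: power_mult_distrib[symmetric] power2_eq_square)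
    also have "(2 ^ (m + 1) :: real)\<^sup>2 = 4 * 4 ^ m"
      by (simp add: power_mult_distrib[symmetric] power2_eq_square)
    finally show ?thesis by simp
  qed
  also have "\<dots> \<le> 4 * 2 ^ (n + 1) * 0.4356 ^ n"
  proof -
    have "(4::real) ^ m = 2 ^ (2 * m)" by (simp add: power_mult)
    also have "\<dots> \<le> 2 ^ (n + 1)" using m2 by (intro power_increasing) auto
    finally show ?thesis by simp
  qed
  also have "\<dots> = 8 * 0.8712 ^ n" by (simp add: power_mult_distrib[symmetric])
  finally show ?thesis unfolding K_def w_def .
qed


abbreviation phi :: "real \<Rightarrow> real" where "phi \<equiv> std_normal_density"

lemma phi_pos: "phi z > 0"
  by (simp add: normal_density_pos)

lemma pos_integral_lborel:
  fixes f :: "real \<Rightarrow> real"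
  assumes f: "integrable lborel f" and nn: "\<And>z. f z \<ge> 0"
    and A: "A \<in> sets lborel" "emeasure lborel A \<noteq> 0" and pos: "\<And>z. z \<in> A \<Longrightarrow> f z > 0"
  shows "integral\<^sup>L lborel f > 0"
proof -
  have ge: "integral\<^sup>L lborel f \<ge> 0" using nn by simp
  show ?thesis
  proof (rule ccontr)
    assume "\<not> ?thesis"
    then have "integral\<^sup>L lborel f = 0" using ge by simp
    then have "AE z in lborel. f z = 0" using integral_nonneg_eq_0_iff_AE[OF f] nn by simp
    then have "AE z in lborel. z \<notin> A" by (rule AE_mp) (use pos in force)
    then have "emeasure lborel A = 0"
      using AE_iff_measurable[of A lborel "\<lambda>z. z \<notin> A"] A(1) by simp
    then show False using A(2) by simp
  qed
qed


lemma P_meas[measurable]: "P a n \<in> borel_measurable borel"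
  unfolding P_def by measurable

lemma integrable_phi_dom:
  fixes g :: "real \<Rightarrow> real" and b :: "nat \<Rightarrow> real"
  assumes g[measurable]: "g \<in> borel_measurable borel"
    and bd: "\<And>z. \<bar>g z\<bar> \<le> (\<Sum>k\<le>N. b k * \<bar>z\<bar> ^ k)"
  shows "integrable lborel (\<lambda>z. phi z * g z)"
proof (rule Bochner_Integration.integrable_bound)
  show "integrable lborel (\<lambda>z. \<Sum>k\<le>N. b k * (phi z * \<bar>z\<bar> ^ k))"
    by (rule Bochner_Integration.integrable_sum, rule Bochner_Integration.integrable_mult_right, rule integrable_std_normal_moment_abs)
  show "(\<lambda>z. phi z * g z) \<in> borel_measurable lborel" by measurable
  show "AE z in lborel. norm (phi z * g z) \<le> norm (\<Sum>k\<le>N. b k * (phi z * \<bar>z\<bar> ^ k))"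
  proof (intro AE_I2)
    fix z
    have "norm (phi z * g z) = phi z * \<bar>g z\<bar>" by (simp add: abs_mult)
    also have "\<dots> \<le> phi z * (\<Sum>k\<le>N. b k * \<bar>z\<bar> ^ k)" using bd[of z] by (intro mult_left_mono) auto
    also have "\<dots> = (\<Sum>k\<le>N. b k * (phi z * \<bar>z\<bar> ^ k))" by (simp add: sum_distrib_left mult_ac)
    also have "\<dots> \<le> norm (\<Sum>k\<le>N. b k * (phi z * \<bar>z\<bar> ^ k))" by simp
    finally show "norm (phi z * g z) \<le> norm (\<Sum>k\<le>N. b k * (phi z * \<bar>z\<bar> ^ k))" .
  qed
qed

lemma P_abs_bound: "\<bar>P a n z\<bar> \<le> (\<Sum>k\<le>n. (if k = 0 then 0 else \<bar>a k\<bar>) * \<bar>z\<bar> ^ k)"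
proof -
  have "\<bar>P a n z\<bar> \<le> (\<Sum>k=1..n. \<bar>a k * z ^ k\<bar>)" unfolding P_def by (rule sum_abs)
  also have "\<dots> = (\<Sum>k\<in>{1..n}. (if k = 0 then 0 else \<bar>a k\<bar>) * \<bar>z\<bar> ^ k)"
    by (intro sum.cong) (auto simp: abs_mult power_abs)
  also have "\<dots> = (\<Sum>k\<le>n. (if k = 0 then 0 else \<bar>a k\<bar>) * \<bar>z\<bar> ^ k)"
    by (rule sum.mono_neutral_left) auto
  finally show ?thesis .
qed

lemma integrable_phi_absP: "integrable lborel (\<lambda>z. phi z * \<bar>P a n z\<bar>)"
  by (rule integrable_phi_dom[where N = n]) (use P_abs_bound in auto)

lemma phi_shift_bound:
  assumes t: "t \<ge> 0"
  shows "phi (t + y) * indicator {c..} (t + y) \<le> exp (- t * c + t\<^sup>2 / 2) * phi y"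
proof (cases "t + y \<ge> c")
  case True
  have e: "phi (t + y) = phi y * exp (- t * y - t\<^sup>2 / 2)"
    by (simp add: std_normal_density_def mult.assoc exp_add[symmetric] power2_eq_square algebra_simps)
      (simp add: field_simps)
  have "- t * y - t\<^sup>2 / 2 \<le> - t * c + t\<^sup>2 / 2"
  proof -
    have "t * (c - t) \<le> t * y" using True t by (intro mult_left_mono) auto
    then show ?thesis by (simp add: power2_eq_square algebra_simps)
  qed
  then have "exp (- t * y - t\<^sup>2 / 2) \<le> exp (- t * c + t\<^sup>2 / 2)" by simp
  then show ?thesis using True e phi_pos[of y]
    by (simp add: mult.commute mult_left_mono)
next
  case False
  then show ?thesis using phi_pos[of y] by (simp add: indicator_def)
qed

lemma shift_integrable:
  assumes t: "t \<ge> 0"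
  shows "integrable lborel (\<lambda>z. phi z * (indicator {c..} z * \<bar>P a n (z - t)\<bar>))"
proof -
  have "integrable lborel (\<lambda>y. phi (t + y) * (indicator {c..} (t + y) * \<bar>P a n y\<bar>))"
  proof (rule Bochner_Integration.integrable_bound)
    show "integrable lborel (\<lambda>y. exp (- t * c + t\<^sup>2 / 2) * (phi y * \<bar>P a n y\<bar>))"
      by (intro integrable_mult_right integrable_phi_absP)
    show "(\<lambda>y. phi (t + y) * (indicator {c..} (t + y) * \<bar>P a n y\<bar>)) \<in> borel_measurable lborel"
      by measurable
    show "AE y in lborel. norm (phi (t + y) * (indicator {c..} (t + y) * \<bar>P a n y\<bar>))
        \<le> norm (exp (- t * c + t\<^sup>2 / 2) * (phi y * \<bar>P a n y\<bar>))"
    proof (intro AE_I2)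
      fix y
      have "norm (phi (t + y) * (indicator {c..} (t + y) * \<bar>P a n y\<bar>))
          = (phi (t + y) * indicator {c..} (t + y)) * \<bar>P a n y\<bar>"
        by (simp add: abs_mult indicator_def)
      also have "\<dots> \<le> (exp (- t * c + t\<^sup>2 / 2) * phi y) * \<bar>P a n y\<bar>"
        by (intro mult_right_mono phi_shift_bound t) auto
      also have "\<dots> \<le> norm (exp (- t * c + t\<^sup>2 / 2) * (phi y * \<bar>P a n y\<bar>))"
        by (simp add: abs_mult)
      finally show "norm (phi (t + y) * (indicator {c..} (t + y) * \<bar>P a n y\<bar>))
        \<le> norm (exp (- t * c + t\<^sup>2 / 2) * (phi y * \<bar>P a n y\<bar>))" .
    qed
  qed
  from lborel_integrable_real_affine[OF this, of 1 "- t"]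
  show ?thesis by simp
qed

lemma shift_integral_bound:
  assumes t: "t \<ge> 0"
  shows "(\<integral>z. phi z * (indicator {c..} z * \<bar>P a n (z - t)\<bar>) \<partial>lborel)
    \<le> exp (- t * c + t\<^sup>2 / 2) * (\<integral>z. phi z * \<bar>P a n z\<bar> \<partial>lborel)"
proof -
  have "(\<integral>z. phi z * (indicator {c..} z * \<bar>P a n (z - t)\<bar>) \<partial>lborel)
      = (\<integral>y. phi (t + y) * (indicator {c..} (t + y) * \<bar>P a n y\<bar>) \<partial>lborel)"
    using lborel_integral_real_affine[of 1 "\<lambda>z. phi z * (indicator {c..} z * \<bar>P a n (z - t)\<bar>)" t]
    by simp
  also have "\<dots> \<le> (\<integral>y. exp (- t * c + t\<^sup>2 / 2) * (phi y * \<bar>P a n y\<bar>) \<partial>lborel)"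
  proof (rule integral_mono')
    show "integrable lborel (\<lambda>y. exp (- t * c + t\<^sup>2 / 2) * (phi y * \<bar>P a n y\<bar>))"
      by (intro integrable_mult_right integrable_phi_absP)
    fix y
    have "phi (t + y) * (indicator {c..} (t + y) * \<bar>P a n y\<bar>)
          = (phi (t + y) * indicator {c..} (t + y)) * \<bar>P a n y\<bar>" by simp
    also have "\<dots> \<le> (exp (- t * c + t\<^sup>2 / 2) * phi y) * \<bar>P a n y\<bar>"
      by (intro mult_right_mono phi_shift_bound t) auto
    finally show "phi (t + y) * (indicator {c..} (t + y) * \<bar>P a n y\<bar>)
        \<le> exp (- t * c + t\<^sup>2 / 2) * (phi y * \<bar>P a n y\<bar>)" by simp
    show "0 \<le> exp (- t * c + t\<^sup>2 / 2) * (phi y * \<bar>P a n y\<bar>)" by simp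
  qed
  also have "\<dots> = exp (- t * c + t\<^sup>2 / 2) * (\<integral>y. phi y * \<bar>P a n y\<bar> \<partial>lborel)"
    by simp
  finally show ?thesis .
qed

lemma tail_bound:
  assumes c: "c > 0" and n: "n \<ge> 1"
  shows "(\<integral>z. phi z * (indicator {c..} z * \<bar>P a n z\<bar>) \<partial>lborel)
    \<le> (\<Sum>i\<le>n. \<bar>Lam c n i\<bar> * exp (- tn c n i * c + (tn c n i)\<^sup>2 / 2)) * (\<integral>z. phi z * \<bar>P a n z\<bar> \<partial>lborel)"
proof -
  define f where "f i z = phi z * (indicator {c..} z * \<bar>P a n (z - tn c n i)\<bar>)" for i z
  have fi: "integrable lborel (f i)" for i unfolding f_def
    by (rule shift_integrable) (use tn_nonneg[OF c] in auto)
  have "(\<integral>z. phi z * (indicator {c..} z * \<bar>P a n z\<bar>) \<partial>lborel) \<le> (\<integral>z. (\<Sum>i\<le>n. \<bar>Lam c n i\<bar> * f i z) \<partial>lborel)"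
  proof (rule integral_mono')
    show "integrable lborel (\<lambda>z. \<Sum>i\<le>n. \<bar>Lam c n i\<bar> * f i z)"
      by (rule Bochner_Integration.integrable_sum, rule Bochner_Integration.integrable_mult_right, rule fi)
    fix z
    have ext: "P a n z = (\<Sum>i\<le>n. P a n (z - tn c n i) * Lam c n i)"
      unfolding Lam_def by (rule P_extrap[OF tn_inj[OF c n]])
    have "\<bar>P a n z\<bar> \<le> (\<Sum>i\<le>n. \<bar>Lam c n i\<bar> * \<bar>P a n (z - tn c n i)\<bar>)"
      unfolding ext by (rule order_trans[OF sum_abs]) (simp add: abs_mult mult.commute)
    then have "phi z * indicator {c..} z * \<bar>P a n z\<bar> \<le> phi z * indicator {c..} z * (\<Sum>i\<le>n. \<bar>Lam c n i\<bar> * \<bar>P a n (z - tn c n i)\<bar>)"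
      by (intro mult_left_mono) auto
    then show "phi z * (indicator {c..} z * \<bar>P a n z\<bar>) \<le> (\<Sum>i\<le>n. \<bar>Lam c n i\<bar> * f i z)"
      by (simp add: f_def sum_distrib_left mult_ac)
    show "0 \<le> (\<Sum>i\<le>n. \<bar>Lam c n i\<bar> * f i z)"
      by (auto simp: f_def intro!: sum_nonneg)
  qed
  also have "\<dots> = (\<Sum>i\<le>n. \<bar>Lam c n i\<bar> * (\<integral>z. f i z \<partial>lborel))"
    by (subst Bochner_Integration.integral_sum) (auto intro!: Bochner_Integration.integrable_mult_right fi)
  also have "\<dots> \<le> (\<Sum>i\<le>n. \<bar>Lam c n i\<bar> * (exp (- tn c n i * c + (tn c n i)\<^sup>2 / 2) * (\<integral>z. phi z * \<bar>P a n z\<bar> \<partial>lborel)))"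
    unfolding f_def by (intro sum_mono mult_left_mono shift_integral_bound tn_nonneg[OF c]) auto
  also have "\<dots> = (\<Sum>i\<le>n. \<bar>Lam c n i\<bar> * exp (- tn c n i * c + (tn c n i)\<^sup>2 / 2)) * (\<integral>z. phi z * \<bar>P a n z\<bar> \<partial>lborel)"
    by (simp only: sum_distrib_right mult.assoc)
  finally show ?thesis .
qed


lemma std_normal_sets[simp]: "sets std_normal = sets borel"
  by (simp add: std_normal_def)

lemma real_distribution_std_normal: "real_distribution std_normal"
proof (intro real_distribution.intro real_distribution_axioms.intro)
  show "prob_space std_normal" unfolding std_normal_def by (rule prob_space_normal_density) simp
  show "sets std_normal = sets borel" by simp
qed

interpretation SN: real_distribution std_normal by (rule real_distribution_std_normal)

lemma measure_std_normal:
  assumes [measurable]: "A \<in> sets borel"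
  shows "measure std_normal A = (\<integral>z. phi z * indicator A z \<partial>lborel)"
proof -
  have "measure std_normal A = integral\<^sup>L std_normal (indicator A)"
    by (simp add: Bochner_Integration.integral_indicator)
  also have "\<dots> = (\<integral>z. phi z * indicator A z \<partial>lborel)"
    unfolding std_normal_def by (subst integral_density) auto
  finally show ?thesis .
qed

lemma integrable_phi_indicator:
  assumes [measurable]: "A \<in> sets borel"
  shows "integrable lborel (\<lambda>z. phi z * indicator A z)"
proof (rule Bochner_Integration.integrable_bound)
  show "integrable lborel phi" by simp
  show "(\<lambda>z. phi z * indicator A z) \<in> borel_measurable lborel" by measurable
  show "AE x in lborel. norm (phi x * indicator A x) \<le> norm (phi x)"
    by (intro AE_I2) (auto simp: indicator_def)
qed

lemma Phi_cont: "isCont Phi x"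
proof -
  have "measure std_normal {x} = (\<integral>z. phi z * indicator {x} z \<partial>lborel)"
    by (rule measure_std_normal) simp
  also have "\<dots> = (\<integral>z. phi x * indicator {x} z \<partial>lborel)"
    by (rule Bochner_Integration.integral_cong) (auto simp: indicator_def)
  also have "\<dots> = 0" by simp
  finally have "measure std_normal {x} = 0" by simp
  then show ?thesis unfolding Phi_def using SN.isCont_cdf by simp
qed

lemma Phi_diff: "x < y \<Longrightarrow> Phi y - Phi x = (\<integral>z. phi z * indicator {x<..y} z \<partial>lborel)"
  unfolding Phi_def by (simp add: SN.cdf_diff_eq measure_std_normal)

lemma Phi_strict: assumes "x < y" shows "Phi x < Phi y"
proof -
  have "(\<integral>z. phi z * indicator {x<..y} z \<partial>lborel) > 0"
  proof (rule pos_integral_lborel)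
    show "integrable lborel (\<lambda>z. phi z * indicator {x<..y} z)" by (rule integrable_phi_indicator) simp
    show "\<And>z. 0 \<le> phi z * indicator {x<..y} z" by simp
    show "{x<..y} \<in> sets lborel" by simp
    show "emeasure lborel {x<..y} \<noteq> 0" using assms by simp
    show "\<And>z. z \<in> {x<..y} \<Longrightarrow> 0 < phi z * indicator {x<..y} z" using phi_pos by simp
  qed
  then show ?thesis using Phi_diff[OF assms] by simp
qed

lemma Phi_bounds: "Phi x \<le> 1" "Phi x \<ge> 0"
  unfolding Phi_def using SN.cdf_bounded_prob SN.cdf_nonneg by auto

lemma Phi_inv_eq:
  assumes p: "0 < p" "p < 1"
  shows "Phi (Phi_inv p) = p"
proof -
  have "eventually (\<lambda>x. Phi x < p) at_bot"
    using SN.cdf_lim_at_bot p unfolding Phi_def by (intro order_tendstoD) auto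
  then obtain a where a: "\<And>x. x \<le> a \<Longrightarrow> Phi x < p" by (auto simp: eventually_at_bot_linorder)
  have "eventually (\<lambda>x. Phi x > p) at_top"
    using SN.cdf_lim_at_top_prob p unfolding Phi_def by (intro order_tendstoD) auto
  then obtain b where b: "\<And>x. x \<ge> b \<Longrightarrow> Phi x > p" by (auto simp: eventually_at_top_linorder)
  define a' where "a' = min a b"
  have 1: "Phi a' \<le> p" using a[of a'] by (simp add: a'_def)
  have 2: "p \<le> Phi b" using b[of b] by simp
  have 3: "a' \<le> b" by (simp add: a'_def)
  have 4: "continuous_on {a'..b} Phi" by (intro continuous_at_imp_continuous_on ballI Phi_cont)
  obtain x where x: "Phi x = p" using IVT'[OF 1 2 3 4] by blast
  have uniq: "y = x" if "Phi y = p" for y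
  proof (rule ccontr)
    assume "y \<noteq> x"
    then have "y < x \<or> x < y" by auto
    then show False
    proof
      assume "y < x" then have "Phi y < Phi x" by (rule Phi_strict)
      then show False using that x by simp
    next
      assume "x < y" then have "Phi x < Phi y" by (rule Phi_strict)
      then show False using that x by simp
    qed
  qed
  have "Phi_inv p = x" unfolding Phi_inv_def
    by (rule the_equality[where P = "\<lambda>y. Phi y = p", OF x uniq])
  then show ?thesis using x by simp
qed

lemma Phi_tail_lower:
  "1 - Phi x \<ge> phi (\<bar>x\<bar> + 1)"
proof -
  have "Phi (x + 1) - Phi x = (\<integral>z. phi z * indicator {x<..x+1} z \<partial>lborel)" by (rule Phi_diff) simp
  also have "\<dots> \<ge> (\<integral>z. phi (\<bar>x\<bar> + 1) * indicator {x<..x+1} z \<partial>lborel)"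
  proof (rule integral_mono)
    show "integrable lborel (\<lambda>z. phi z * indicator {x<..x+1} z)" by (rule integrable_phi_indicator) simp
    show "integrable lborel (\<lambda>z. phi (\<bar>x\<bar> + 1) * indicator {x<..x+1} z)"
      by (intro Bochner_Integration.integrable_mult_right) (simp add: integrable_real_indicator)
    fix z
    show "phi (\<bar>x\<bar> + 1) * indicator {x<..x+1} z \<le> phi z * indicator {x<..x+1} z"
    proof (cases "z \<in> {x<..x+1}")
      case True
      then have "z\<^sup>2 \<le> (\<bar>x\<bar> + 1)\<^sup>2" by (intro power2_le_iff_abs_le[THEN iffD2]) auto
      then show ?thesis using True by (auto simp: std_normal_density_def intro!: divide_right_mono)
    qed simp
  qed
  also have "(\<integral>z. phi (\<bar>x\<bar> + 1) * indicator {x<..x+1} z \<partial>lborel) = phi (\<bar>x\<bar> + 1)"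
    by simp
  finally show ?thesis using Phi_bounds[of "x+1"] by simp
qed


lemma eps_eq: "(3::real) powi (- (2 * int n)) / 4 = 1 / (4 * 9 ^ n)"
proof -
  have "(3::real) powi (- (2 * int n)) = inverse (3 ^ (2 * n))"
    by (simp add: power_int_minus power_int_of_nat[symmetric])
  also have "(3::real) ^ (2 * n) = 9 ^ n" by (simp add: power_mult)
  finally have "(3::real) powi (- (2 * int n)) = 1 / 9 ^ n" by (simp add: inverse_eq_divide)
  then show ?thesis by simp
qed

lemma exp2_le: "exp (2::real) \<le> 7.4"
proof -
  have "exp (2::real) = exp 1 * exp 1" by (simp add: exp_add[symmetric])
  also have "\<dots> \<le> 2.72 * 2.72" using e_less_272 by (intro mult_mono) auto
  finally show ?thesis by simp
qed

lemma c_large_aux: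
  assumes n: "n \<ge> 1" and big: "exp (2 * sqrt (real n) + 1/2) \<le> (9/7.4) ^ n"
  shows "Phi_inv (1 - (3::real) powi (- (2 * int n)) / 4) \<ge> 2 * sqrt (real n)"
proof -
  define e where "e = (1::real) / (4 * 9 ^ n)"
  have "(1::real) \<le> 9 ^ n" by simp
  then have "1 < 4 * (9::real) ^ n" by linarith
  then have e0: "0 < e" "e < 1" unfolding e_def by auto
  define c where "c = Phi_inv (1 - e)"
  have Pc: "Phi c = 1 - e" unfolding c_def by (rule Phi_inv_eq) (use e0 in auto)
  define c0 where "c0 = 2 * sqrt (real n)"
  have c00: "c0 \<ge> 0" by (simp add: c0_def)
  show ?thesis unfolding eps_eq e_def[symmetric] c_def[symmetric] c0_def[symmetric]
  proof (rule ccontr)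
    assume "\<not> c0 \<le> c"
    then have "c < c0" by simp
    then have "Phi c < Phi c0" by (rule Phi_strict)
    then have "e > 1 - Phi c0" using Pc by simp
    moreover have "1 - Phi c0 \<ge> phi (c0 + 1)" using Phi_tail_lower[of c0] c00 by simp
    ultimately have lt: "phi (c0 + 1) < e" by simp
    have sq: "(c0 + 1)\<^sup>2 / 2 = 2 * real n + (2 * sqrt (real n) + 1/2)"
      by (simp add: c0_def power2_eq_square algebra_simps)
    have "exp ((c0 + 1)\<^sup>2 / 2) = exp 2 ^ n * exp (2 * sqrt (real n) + 1/2)"
      unfolding sq exp_add by (simp add: exp_of_nat_mult[symmetric] mult.commute)
    also have "\<dots> \<le> 7.4 ^ n * (9/7.4) ^ n"
      by (intro mult_mono power_mono exp2_le big) auto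
    also have "\<dots> = 9 ^ n" by (simp add: power_mult_distrib[symmetric])
    finally have ex: "exp ((c0 + 1)\<^sup>2 / 2) \<le> 9 ^ n" .
    have "sqrt (2 * pi) < 4"
    proof -
      have "2 * pi < 4\<^sup>2" using pi_less_4 by simp
      then have "sqrt (2 * pi) < sqrt (4\<^sup>2)" by (intro real_sqrt_less_mono)
      then show ?thesis by simp
    qed
    have "inverse (9 ^ n) \<le> inverse (exp ((c0 + 1)\<^sup>2 / 2))" by (rule le_imp_inverse_le[OF ex]) simp
    also have "inverse (exp ((c0 + 1)\<^sup>2 / 2)) = exp (- (c0 + 1)\<^sup>2 / 2)"
      by (simp only: exp_minus[symmetric] minus_divide_left)
    finally have i1: "1 / 9 ^ n \<le> exp (- (c0 + 1)\<^sup>2 / 2)" by (simp only: inverse_eq_divide)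
    have i2: "1 / 4 < 1 / sqrt (2 * pi)"
      using \<open>sqrt (2 * pi) < 4\<close> by (intro divide_strict_left_mono) auto
    have "1 / (4 * 9 ^ n) = (1 / 4) * (1 / (9::real) ^ n)" by simp
    also have "\<dots> < (1 / sqrt (2 * pi)) * exp (- (c0 + 1)\<^sup>2 / 2)"
      by (rule mult_less_le_imp_less[OF i2 i1]) auto
    also have "\<dots> = phi (c0 + 1)" by (simp only: std_normal_density_def)
    finally have "1 / (4 * 9 ^ n) < phi (c0 + 1)" .
    then show False using lt unfolding e_def by simp
  qed
qed

lemma c_large:
  "\<exists>N. \<forall>n\<ge>N. Phi_inv (1 - (3::real) powi (- (2 * int n)) / 4) \<ge> 2 * sqrt (real n)"
proof -
  have "eventually (\<lambda>n::nat. exp (2 * sqrt (real n) + 1/2) \<le> (9/7.4) ^ n) sequentially"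
    by real_asymp
  moreover have "eventually (\<lambda>n::nat. n \<ge> 1) sequentially" by (rule eventually_ge_at_top)
  ultimately have "eventually (\<lambda>n. Phi_inv (1 - (3::real) powi (- (2 * int n)) / 4) \<ge> 2 * sqrt (real n)) sequentially"
    by eventually_elim (rule c_large_aux)
  then show ?thesis by (simp add: eventually_sequentially)
qed


lemma integrable_phi_pb:
  fixes g :: "real \<Rightarrow> real"
  assumes g[measurable]: "g \<in> borel_measurable borel"
    and bd: "\<And>z. \<bar>g z\<bar> \<le> B * (1 + \<bar>z\<bar> ^ N)"
  shows "integrable lborel (\<lambda>z. phi z * g z)"
proof (rule Bochner_Integration.integrable_bound)
  show "integrable lborel (\<lambda>z. B * (phi z + phi z * \<bar>z\<bar> ^ N))"
    by (intro Bochner_Integration.integrable_mult_right Bochner_Integration.integrable_add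
        integrable_std_normal_moment_abs) simp
  show "(\<lambda>z. phi z * g z) \<in> borel_measurable lborel" by measurable
  show "AE z in lborel. norm (phi z * g z) \<le> norm (B * (phi z + phi z * \<bar>z\<bar> ^ N))"
  proof (intro AE_I2)
    fix z
    have "norm (phi z * g z) = phi z * \<bar>g z\<bar>" by (simp add: abs_mult)
    also have "\<dots> \<le> phi z * (B * (1 + \<bar>z\<bar> ^ N))" using bd[of z] by (intro mult_left_mono) auto
    also have "\<dots> = B * (phi z + phi z * \<bar>z\<bar> ^ N)" by (simp add: algebra_simps)
    also have "\<dots> \<le> norm (B * (phi z + phi z * \<bar>z\<bar> ^ N))" by simp
    finally show "norm (phi z * g z) \<le> norm (B * (phi z + phi z * \<bar>z\<bar> ^ N))" .
  qed
qed

lemma P_bound_pb: "\<bar>P a n z\<bar> \<le> (\<Sum>k=1..n. \<bar>a k\<bar>) * (1 + \<bar>z\<bar> ^ n)"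
proof -
  have "\<bar>P a n z\<bar> \<le> (\<Sum>k=1..n. \<bar>a k\<bar> * \<bar>z\<bar> ^ k)"
    unfolding P_def by (rule order_trans[OF sum_abs]) (simp add: abs_mult power_abs)
  also have "\<dots> \<le> (\<Sum>k=1..n. \<bar>a k\<bar> * (1 + \<bar>z\<bar> ^ n))"
  proof (intro sum_mono mult_left_mono)
    fix k assume k: "k \<in> {1..n}"
    show "\<bar>z\<bar> ^ k \<le> 1 + \<bar>z\<bar> ^ n"
    proof (cases "\<bar>z\<bar> \<le> 1")
      case True
      then have "\<bar>z\<bar> ^ k \<le> 1" by (simp add: power_le_one)
      then show ?thesis by (simp add: add_increasing2)
    next
      case False
      then have "\<bar>z\<bar> ^ k \<le> \<bar>z\<bar> ^ n" using k by (intro power_increasing) auto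
      then show ?thesis by simp
    qed
  qed simp
  also have "\<dots> = (\<Sum>k=1..n. \<bar>a k\<bar>) * (1 + \<bar>z\<bar> ^ n)" by (simp add: sum_distrib_right)
  finally show ?thesis .
qed

lemma P_diff: "P a n z - P b n z = P (\<lambda>k. a k - b k) n z"
  unfolding P_def by (simp add: sum_subtractf algebra_simps)

lemma P_scale: "P (\<lambda>k. s * a k) n z = s * P a n z"
  unfolding P_def by (simp add: sum_distrib_left mult_ac)

lemma P_upd: "k \<in> {1..n} \<Longrightarrow> P (a(k := a k + t)) n z = P a n z + t * z ^ k"
proof -
  assume k: "k \<in> {1..n}"
  have "P (a(k := a k + t)) n z = (\<Sum>j=1..n. a j * z ^ j + (if j = k then t * z ^ k else 0))"
    unfolding P_def by (intro sum.cong) (auto simp: algebra_simps)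
  also have "\<dots> = P a n z + t * z ^ k" using k by (simp add: sum.distrib P_def)
  finally show ?thesis .
qed

lemma P_zero: "(\<And>k. k \<in> {1..n} \<Longrightarrow> a k = 0) \<Longrightarrow> P a n z = 0"
  unfolding P_def by simp

definition Mom :: "nat \<Rightarrow> real" where "Mom k = (\<integral>z. phi z * \<bar>z\<bar> ^ k \<partial>lborel)"

lemma lip_functional:
  fixes h :: "real \<Rightarrow> real \<Rightarrow> real"
  assumes lip: "\<And>z x y. \<bar>h z x - h z y\<bar> \<le> \<bar>x - y\<bar>"
    and hb: "\<And>z x. \<bar>h z x\<bar> \<le> 1 + \<bar>x\<bar>"
    and meas: "\<And>a. (\<lambda>z. h z (P a n z)) \<in> borel_measurable borel"
  shows "\<bar>(\<integral>z. phi z * h z (P a n z) \<partial>lborel) - (\<integral>z. phi z * h z (P b n z) \<partial>lborel)\<bar>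
      \<le> (\<Sum>k=1..n. \<bar>a k - b k\<bar> * Mom k)"
proof -
  have int: "integrable lborel (\<lambda>z. phi z * h z (P a n z))" for a
  proof (rule integrable_phi_pb[OF meas])
    fix z
    have "\<bar>h z (P a n z)\<bar> \<le> 1 + (\<Sum>k=1..n. \<bar>a k\<bar>) * (1 + \<bar>z\<bar> ^ n)"
      using hb[of z "P a n z"] P_bound_pb[of a n z] by linarith
    also have "\<dots> \<le> (1 + (\<Sum>k=1..n. \<bar>a k\<bar>)) * (1 + \<bar>z\<bar> ^ n)"
      by (simp add: algebra_simps)
    finally show "\<bar>h z (P a n z)\<bar> \<le> (1 + (\<Sum>k=1..n. \<bar>a k\<bar>)) * (1 + \<bar>z\<bar> ^ n)" .
  qed
  have "(\<integral>z. phi z * h z (P a n z) \<partial>lborel) - (\<integral>z. phi z * h z (P b n z) \<partial>lborel)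
      = (\<integral>z. phi z * h z (P a n z) - phi z * h z (P b n z) \<partial>lborel)"
    by (rule Bochner_Integration.integral_diff[OF int int, symmetric])
  also have "\<bar>\<dots>\<bar> \<le> (\<integral>z. (\<Sum>k=1..n. \<bar>a k - b k\<bar> * (phi z * \<bar>z\<bar> ^ k)) \<partial>lborel)"
  proof (rule integral_abs_bound_integral)
    show "integrable lborel (\<lambda>z. phi z * h z (P a n z) - phi z * h z (P b n z))"
      using int by simp
    show "integrable lborel (\<lambda>z. \<Sum>k=1..n. \<bar>a k - b k\<bar> * (phi z * \<bar>z\<bar> ^ k))"
      by (rule Bochner_Integration.integrable_sum, rule Bochner_Integration.integrable_mult_right,
          rule integrable_std_normal_moment_abs)
    fix z
    have "\<bar>phi z * h z (P a n z) - phi z * h z (P b n z)\<bar> = phi z * \<bar>h z (P a n z) - h z (P b n z)\<bar>"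
      by (simp add: abs_mult right_diff_distrib[symmetric])
    also have "\<dots> \<le> phi z * \<bar>P (\<lambda>k. a k - b k) n z\<bar>"
      using lip[of z "P a n z" "P b n z"] by (intro mult_left_mono) (auto simp: P_diff)
    also have "\<dots> \<le> phi z * (\<Sum>k=1..n. \<bar>a k - b k\<bar> * \<bar>z\<bar> ^ k)"
      unfolding P_def by (intro mult_left_mono order_trans[OF sum_abs]) (auto simp: abs_mult power_abs)
    also have "\<dots> = (\<Sum>k=1..n. \<bar>a k - b k\<bar> * (phi z * \<bar>z\<bar> ^ k))"
      by (simp add: sum_distrib_left mult_ac)
    finally show "\<bar>phi z * h z (P a n z) - phi z * h z (P b n z)\<bar> \<le> (\<Sum>k=1..n. \<bar>a k - b k\<bar> * (phi z * \<bar>z\<bar> ^ k))" .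
  qed
  also have "\<dots> = (\<Sum>k=1..n. \<bar>a k - b k\<bar> * Mom k)"
    unfolding Mom_def
    by (subst Bochner_Integration.integral_sum)
       (auto intro!: Bochner_Integration.integrable_mult_right integrable_std_normal_moment_abs)
  finally show ?thesis .
qed

lemma cont_functional:
  fixes h :: "real \<Rightarrow> real \<Rightarrow> real"
  assumes lip: "\<And>z x y. \<bar>h z x - h z y\<bar> \<le> \<bar>x - y\<bar>"
    and hb: "\<And>z x. \<bar>h z x\<bar> \<le> 1 + \<bar>x\<bar>"
    and meas: "\<And>a. (\<lambda>z. h z (P a n z)) \<in> borel_measurable borel"
  shows "continuous_on S (\<lambda>a. \<integral>z. phi z * h z (P a n z) \<partial>lborel)"
proof (rule continuous_on_sequentiallyI)
  fix u :: "nat \<Rightarrow> nat \<Rightarrow> real" and a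
  assume ua: "u \<longlonglongrightarrow> a"
  have uk: "(\<lambda>j. u j k) \<longlonglongrightarrow> a k" for k
  proof -
    have "\<forall>x\<in>UNIV. isCont (\<lambda>x::nat\<Rightarrow>real. x k) x"
      by (rule continuous_on_eq_continuous_at[THEN iffD1, OF open_UNIV continuous_on_product_coordinates])
    then have "isCont (\<lambda>x::nat\<Rightarrow>real. x k) a" by blast
    from isCont_tendsto_compose[OF this ua] show ?thesis .
  qed
  have "(\<lambda>j. \<Sum>k=1..n. \<bar>u j k - a k\<bar> * Mom k) \<longlonglongrightarrow> (\<Sum>k=1..n. \<bar>a k - a k\<bar> * Mom k)"
    by (intro tendsto_intros uk)
  then have lim0: "(\<lambda>j. \<Sum>k=1..n. \<bar>u j k - a k\<bar> * Mom k) \<longlonglongrightarrow> 0" by simp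
  have "(\<lambda>j. (\<integral>z. phi z * h z (P (u j) n z) \<partial>lborel) - (\<integral>z. phi z * h z (P a n z) \<partial>lborel)) \<longlonglongrightarrow> 0"
  proof (rule Lim_null_comparison[OF always_eventually lim0], rule allI)
    fix j
    show "norm ((\<integral>z. phi z * h z (P (u j) n z) \<partial>lborel) - (\<integral>z. phi z * h z (P a n z) \<partial>lborel))
        \<le> (\<Sum>k=1..n. \<bar>u j k - a k\<bar> * Mom k)"
      using lip_functional[OF lip hb meas, of "u j" a] by (simp only: real_norm_def)
  qed
  then show "(\<lambda>j. \<integral>z. phi z * h z (P (u j) n z) \<partial>lborel) \<longlonglongrightarrow> (\<integral>z. phi z * h z (P a n z) \<partial>lborel)"
    by (simp add: LIM_zero_iff)
qed

definition Box :: "nat \<Rightarrow> real \<Rightarrow> (nat \<Rightarrow> real) set" where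
  "Box n R = Pi\<^sub>E UNIV (\<lambda>k. if k \<in> {1..n} then {-R..R} else {0})"

lemma Box_iff: "a \<in> Box n R \<longleftrightarrow> (\<forall>k. if k \<in> {1..n} then \<bar>a k\<bar> \<le> R else a k = 0)"
  unfolding Box_def by (auto simp: PiE_iff abs_le_iff split: if_splits)

lemma compact_Box: "compact (Box n R)"
proof -
  have "compactin (product_topology (\<lambda>i. euclidean) UNIV) (Box n R)"
    unfolding Box_def compactin_PiE by auto
  then show ?thesis by (simp add: euclidean_product_topology)
qed


definition psi :: "real \<Rightarrow> real" where "psi x = sqrt (1 + x\<^sup>2)"
definition sig :: "real \<Rightarrow> real" where "sig x = x / sqrt (1 + x\<^sup>2)"

lemma psi_pos: "psi x > 0" unfolding psi_def by (simp add: add_pos_nonneg)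

lemma psi_ge_abs: "\<bar>x\<bar> \<le> psi x"
proof -
  have "\<bar>x\<bar> = sqrt (x\<^sup>2)" by simp
  also have "\<dots> \<le> sqrt (1 + x\<^sup>2)" by (intro real_sqrt_le_mono) simp
  finally show ?thesis by (simp add: psi_def)
qed

lemma psi_le: "psi x \<le> 1 + \<bar>x\<bar>"
proof -
  have "1 + x\<^sup>2 \<le> (1 + \<bar>x\<bar>)\<^sup>2" by (simp add: power2_eq_square algebra_simps)
  then have "sqrt (1 + x\<^sup>2) \<le> sqrt ((1 + \<bar>x\<bar>)\<^sup>2)" by (rule real_sqrt_le_mono)
  then show ?thesis by (simp add: psi_def)
qed

lemma psi_norm: "psi x = norm ((1::real), x)"
  by (simp add: psi_def norm_Pair)

lemma psi_lip: "\<bar>psi x - psi y\<bar> \<le> \<bar>x - y\<bar>"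
proof -
  have "\<bar>psi x - psi y\<bar> \<le> norm (((1::real), x) - (1, y))"
    unfolding psi_norm by (rule norm_triangle_ineq3)
  also have "\<dots> = \<bar>x - y\<bar>" by (simp add: norm_Pair)
  finally show ?thesis .
qed

lemma sig_abs: "\<bar>sig x\<bar> \<le> 1"
proof -
  have "\<bar>sig x\<bar> = \<bar>x\<bar> / psi x" using psi_pos[of x] by (simp add: sig_def psi_def abs_divide)
  also have "\<dots> \<le> 1" using psi_ge_abs[of x] psi_pos[of x] by simp
  finally show ?thesis .
qed

lemma psi_quad: "psi (x + y) \<le> psi x + sig x * y + y\<^sup>2 / 2"
proof -
  define s where "s = sqrt (1 + x\<^sup>2)"
  have s0: "s > 0" unfolding s_def by (simp add: add_pos_nonneg)
  have s1: "s \<ge> 1" unfolding s_def by simp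
  have s2: "s\<^sup>2 = 1 + x\<^sup>2" unfolding s_def by (simp add: add_nonneg_nonneg)
  define w where "w = x * y / s + y\<^sup>2 / 2"
  have rhs: "psi x + sig x * y + y\<^sup>2 / 2 = s + w" by (simp add: psi_def sig_def s_def w_def)
  have sw: "s * w = x * y + s * y\<^sup>2 / 2" using s0 by (simp add: w_def field_simps)
  have "(s + w)\<^sup>2 = s\<^sup>2 + 2 * (s * w) + w\<^sup>2" by (simp add: power2_eq_square algebra_simps)
  also have "\<dots> = 1 + (x + y)\<^sup>2 + ((s - 1) * y\<^sup>2 + w\<^sup>2)"
    unfolding s2 sw by (simp add: power2_eq_square algebra_simps)
  finally have eq: "(s + w)\<^sup>2 = 1 + (x + y)\<^sup>2 + ((s - 1) * y\<^sup>2 + w\<^sup>2)" .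
  have "(s - 1) * y\<^sup>2 + w\<^sup>2 \<ge> 0" using s1 by (intro add_nonneg_nonneg mult_nonneg_nonneg) auto
  then have le: "1 + (x + y)\<^sup>2 \<le> (s + w)\<^sup>2" using eq by linarith
  have pos: "s + w \<ge> 0"
  proof -
    have "s * (s + w) = 1 + x\<^sup>2 + x * y + s * y\<^sup>2 / 2" using s2 sw by (simp add: algebra_simps power2_eq_square)
    also have "\<dots> \<ge> 1 + x\<^sup>2 + x * y + y\<^sup>2 / 2"
    proof -
      have "1 * y\<^sup>2 \<le> s * y\<^sup>2" by (rule mult_right_mono[OF s1 zero_le_power2])
      then show ?thesis by simp
    qed
    also have "1 + x\<^sup>2 + x * y + y\<^sup>2 / 2 = 1 + (x + y / 2)\<^sup>2 + y\<^sup>2 / 4"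
      by (simp add: power2_eq_square algebra_simps)
    finally have h: "s * (s + w) \<ge> 1 + (x + y / 2)\<^sup>2 + y\<^sup>2 / 4" .
    have "0 \<le> 1 + (x + y / 2)\<^sup>2 + y\<^sup>2 / 4" by (intro add_nonneg_nonneg) auto
    then have "s * (s + w) \<ge> 0" using h by linarith
    then show ?thesis using s0 by (simp add: zero_le_mult_iff)
  qed
  have "psi (x + y) = sqrt (1 + (x + y)\<^sup>2)" by (simp add: psi_def)
  also have "\<dots> \<le> sqrt ((s + w)\<^sup>2)" using le by (rule real_sqrt_le_mono)
  also have "\<dots> = s + w" using pos by simp
  finally show ?thesis using rhs by simp
qed

lemma P_cong: "(\<And>k. k \<in> {1..n} \<Longrightarrow> a k = b k) \<Longrightarrow> P a n z = P b n z"
  unfolding P_def by (rule sum.cong) auto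

lemma P_meas2[measurable]: "(\<lambda>z. P a n z) \<in> borel_measurable borel"
  using P_meas by (simp add: comp_def)

lemma ind_cases: "indicator {..<c} z = (if z < c then 1 else (0::real))"
  "indicator {c..} z = (if c \<le> z then 1 else (0::real))"
  by (auto simp: indicator_def)

context
  fixes n :: nat and c K :: real
  assumes n1: "n \<ge> 1"
    and KI: "\<And>a. (\<integral>z. phi z * (indicator {c..} z * \<bar>P a n z\<bar>) \<partial>lborel) \<le> K * (\<integral>z. phi z * \<bar>P a n z\<bar> \<partial>lborel)"
    and Khalf: "K < 1/2"
begin

definition Fd :: "(nat \<Rightarrow> real) \<Rightarrow> real" where
  "Fd a = (\<integral>z. phi z * (indicator {..<c} z * \<bar>P a n z\<bar> - indicator {c..} z * P a n z) \<partial>lborel)"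

definition Psi :: "(nat \<Rightarrow> real) \<Rightarrow> real" where
  "Psi a = (\<integral>z. phi z * (indicator {..<c} z * psi (P a n z) - indicator {c..} z * P a n z) \<partial>lborel)"

lemma Pbnd: "1 + \<bar>P a n z\<bar> \<le> (1 + (\<Sum>k=1..n. \<bar>a k\<bar>)) * (1 + \<bar>z\<bar> ^ n)"
proof -
  have "1 + \<bar>P a n z\<bar> \<le> 1 + (\<Sum>k=1..n. \<bar>a k\<bar>) * (1 + \<bar>z\<bar> ^ n)"
    using P_bound_pb[of a n z] by simp
  also have "\<dots> \<le> (1 + (\<Sum>k=1..n. \<bar>a k\<bar>)) * (1 + \<bar>z\<bar> ^ n)"
    by (simp add: algebra_simps)
  finally show ?thesis .
qed

lemma Pbnd': "\<bar>P a n z\<bar> \<le> (1 + (\<Sum>k=1..n. \<bar>a k\<bar>)) * (1 + \<bar>z\<bar> ^ n)"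
  using Pbnd[of a z] by simp

lemma zk_bnd: "\<bar>(z::real) ^ k\<bar> \<le> 1 * (1 + \<bar>z\<bar> ^ k)"
  by (simp add: power_abs)

lemma psi_meas[measurable]: "psi \<in> borel_measurable borel"
  unfolding psi_def[abs_def] by measurable

lemma sig_meas[measurable]: "sig \<in> borel_measurable borel"
  unfolding sig_def[abs_def] by measurable

lemma Fd_int: "integrable lborel (\<lambda>z. phi z * (indicator {..<c} z * \<bar>P a n z\<bar> - indicator {c..} z * P a n z))"
proof (rule integrable_phi_pb[where B = "1 + (\<Sum>k=1..n. \<bar>a k\<bar>)" and N = n])
  show "(\<lambda>z. indicator {..<c} z * \<bar>P a n z\<bar> - indicator {c..} z * P a n z) \<in> borel_measurable borel"
    by measurable
  fix z
  have "\<bar>indicator {..<c} z * \<bar>P a n z\<bar> - indicator {c..} z * P a n z\<bar> = \<bar>P a n z\<bar>"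
    by (auto simp: indicator_def)
  then show "\<bar>indicator {..<c} z * \<bar>P a n z\<bar> - indicator {c..} z * P a n z\<bar> \<le> (1 + (\<Sum>k=1..n. \<bar>a k\<bar>)) * (1 + \<bar>z\<bar> ^ n)"
    using Pbnd'[of a z] by simp
qed

lemma Psi_int: "integrable lborel (\<lambda>z. phi z * (indicator {..<c} z * psi (P a n z) - indicator {c..} z * P a n z))"
proof (rule integrable_phi_pb[where B = "1 + (\<Sum>k=1..n. \<bar>a k\<bar>)" and N = n])
  show "(\<lambda>z. indicator {..<c} z * psi (P a n z) - indicator {c..} z * P a n z) \<in> borel_measurable borel"
    by measurable
  fix z
  have "\<bar>indicator {..<c} z * psi (P a n z) - indicator {c..} z * P a n z\<bar> \<le> 1 + \<bar>P a n z\<bar>"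
    using psi_le[of "P a n z"] psi_pos[of "P a n z"] by (auto simp: indicator_def)
  then show "\<bar>indicator {..<c} z * psi (P a n z) - indicator {c..} z * P a n z\<bar> \<le> (1 + (\<Sum>k=1..n. \<bar>a k\<bar>)) * (1 + \<bar>z\<bar> ^ n)"
    using Pbnd[of a z] by linarith
qed

lemma absP_int: "integrable lborel (\<lambda>z. phi z * \<bar>P a n z\<bar>)"
proof (rule integrable_phi_pb[where B = "1 + (\<Sum>k=1..n. \<bar>a k\<bar>)" and N = n])
  show "(\<lambda>z. \<bar>P a n z\<bar>) \<in> borel_measurable borel" by measurable
  fix z
  show "\<bar>\<bar>P a n z\<bar>\<bar> \<le> (1 + (\<Sum>k=1..n. \<bar>a k\<bar>)) * (1 + \<bar>z\<bar> ^ n)"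
    using Pbnd'[of a z] by (simp only: abs_abs)
qed

lemma tailP_int: "integrable lborel (\<lambda>z. phi z * (indicator {c..} z * \<bar>P a n z\<bar>))"
proof (rule integrable_phi_pb[where B = "1 + (\<Sum>k=1..n. \<bar>a k\<bar>)" and N = n])
  show "(\<lambda>z. indicator {c..} z * \<bar>P a n z\<bar>) \<in> borel_measurable borel" by measurable
  fix z
  show "\<bar>indicator {c..} z * \<bar>P a n z\<bar>\<bar> \<le> (1 + (\<Sum>k=1..n. \<bar>a k\<bar>)) * (1 + \<bar>z\<bar> ^ n)"
    using Pbnd'[of a z] by (auto simp: indicator_def)
qed

lemma Fd_cont: "continuous_on S Fd"
  unfolding Fd_def
proof (rule cont_functional[where h = "\<lambda>z x. indicator {..<c} z * \<bar>x\<bar> - indicator {c..} z * x"])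
  fix z x y :: real
  show "\<bar>(indicator {..<c} z * \<bar>x\<bar> - indicator {c..} z * x) - (indicator {..<c} z * \<bar>y\<bar> - indicator {c..} z * y)\<bar> \<le> \<bar>x - y\<bar>"
    using abs_triangle_ineq3[of x y] by (auto simp: indicator_def)
  show "\<bar>indicator {..<c} z * \<bar>x\<bar> - indicator {c..} z * x\<bar> \<le> 1 + \<bar>x\<bar>"
    by (auto simp: indicator_def)
next
  fix a
  show "(\<lambda>z. indicator {..<c} z * \<bar>P a n z\<bar> - indicator {c..} z * P a n z) \<in> borel_measurable borel"
    by measurable
qed

lemma Psi_cont: "continuous_on S Psi"
  unfolding Psi_def
proof (rule cont_functional[where h = "\<lambda>z x. indicator {..<c} z * psi x - indicator {c..} z * x"])
  fix z x y :: real
  show "\<bar>(indicator {..<c} z * psi x - indicator {c..} z * x) - (indicator {..<c} z * psi y - indicator {c..} z * y)\<bar> \<le> \<bar>x - y\<bar>"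
    using psi_lip[of x y] by (auto simp: indicator_def)
  show "\<bar>indicator {..<c} z * psi x - indicator {c..} z * x\<bar> \<le> 1 + \<bar>x\<bar>"
    using psi_le[of x] psi_pos[of x] by (auto simp: indicator_def)
next
  fix a
  show "(\<lambda>z. indicator {..<c} z * psi (P a n z) - indicator {c..} z * P a n z) \<in> borel_measurable borel"
    by measurable
qed

lemma Fd_cong: "(\<And>k. k \<in> {1..n} \<Longrightarrow> a k = b k) \<Longrightarrow> Fd a = Fd b"
  unfolding Fd_def using P_cong[of n a b] by simp

lemma Psi_cong: "(\<And>k. k \<in> {1..n} \<Longrightarrow> a k = b k) \<Longrightarrow> Psi a = Psi b"
  unfolding Psi_def using P_cong[of n a b] by simp

lemma Fd_scale: "s \<ge> 0 \<Longrightarrow> Fd (\<lambda>k. s * a k) = s * Fd a"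
proof -
  assume s: "s \<ge> 0"
  have "Fd (\<lambda>k. s * a k) = (\<integral>z. s * (phi z * (indicator {..<c} z * \<bar>P a n z\<bar> - indicator {c..} z * P a n z)) \<partial>lborel)"
    unfolding Fd_def P_scale using s by (intro Bochner_Integration.integral_cong) (auto simp: abs_mult algebra_simps)
  also have "\<dots> = s * Fd a" unfolding Fd_def by simp
  finally show ?thesis .
qed

lemma Fd_zero: "(\<And>k. k \<in> {1..n} \<Longrightarrow> a k = 0) \<Longrightarrow> Fd a = 0"
  unfolding Fd_def using P_zero[of n a] by simp

lemma I_pos:
  assumes k: "k \<in> {1..n}" "a k \<noteq> 0"
  shows "(\<integral>z. phi z * \<bar>P a n z\<bar> \<partial>lborel) > 0"
proof -
  define cc where "cc i = (if i = 0 then 0 else a i)" for i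
  have Pcc: "P a n z = (\<Sum>i\<le>n. cc i * z ^ i)" for z
  proof -
    have "P a n z = (\<Sum>i\<in>{1..n}. cc i * z ^ i)" unfolding P_def cc_def by (intro sum.cong) auto
    also have "\<dots> = (\<Sum>i\<le>n. cc i * z ^ i)" by (rule sum.mono_neutral_left) (auto simp: cc_def)
    finally show ?thesis .
  qed
  have "\<exists>k\<le>n. cc k \<noteq> 0" using k by (intro exI[of _ k]) (auto simp: cc_def)
  from polyfun_rootbound[OF this] have fin: "finite {z. P a n z = 0}" unfolding Pcc by blast
  define A where "A = {0<..1::real} - {z. P a n z = 0}"
  show ?thesis
  proof (rule pos_integral_lborel)
    show "integrable lborel (\<lambda>z. phi z * \<bar>P a n z\<bar>)" by (rule absP_int)
    show "\<And>z. 0 \<le> phi z * \<bar>P a n z\<bar>" by simp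
    have nul: "{z. P a n z = 0} \<in> null_sets lborel" by (rule finite_imp_null_set_lborel[OF fin])
    show "A \<in> sets lborel" unfolding A_def using nul by auto
    have "emeasure lborel A = emeasure lborel {0<..1::real}"
      unfolding A_def by (rule emeasure_Diff_null_set[OF nul]) simp
    then show "emeasure lborel A \<noteq> 0" by simp
    show "\<And>z. z \<in> A \<Longrightarrow> 0 < phi z * \<bar>P a n z\<bar>" unfolding A_def using phi_pos by auto
  qed
qed

lemma Fd_pos:
  assumes k: "k \<in> {1..n}" "a k \<noteq> 0"
  shows "Fd a > 0"
proof -
  define I where "I = (\<integral>z. phi z * \<bar>P a n z\<bar> \<partial>lborel)"
  define T where "T = (\<integral>z. phi z * (indicator {c..} z * \<bar>P a n z\<bar>) \<partial>lborel)"
  have I0: "I > 0" unfolding I_def by (rule I_pos[of k a]) (use k in auto)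
  have TK: "T \<le> K * I" unfolding T_def I_def by (rule KI)
  have "I - 2 * T = (\<integral>z. phi z * \<bar>P a n z\<bar> - 2 * (phi z * (indicator {c..} z * \<bar>P a n z\<bar>)) \<partial>lborel)"
    unfolding I_def T_def
    by (subst Bochner_Integration.integral_diff) (auto intro!: absP_int tailP_int)
  also have "\<dots> \<le> Fd a" unfolding Fd_def
  proof (rule integral_mono)
    show "integrable lborel (\<lambda>z. phi z * \<bar>P a n z\<bar> - 2 * (phi z * (indicator {c..} z * \<bar>P a n z\<bar>)))"
      by (auto intro!: absP_int tailP_int)
    show "integrable lborel (\<lambda>z. phi z * (indicator {..<c} z * \<bar>P a n z\<bar> - indicator {c..} z * P a n z))"
      by (rule Fd_int)
    fix z
    have "\<bar>P a n z\<bar> - 2 * (indicator {c..} z * \<bar>P a n z\<bar>) \<le> indicator {..<c} z * \<bar>P a n z\<bar> - indicator {c..} z * P a n z"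
      by (auto simp: indicator_def)
    then have "phi z * (\<bar>P a n z\<bar> - 2 * (indicator {c..} z * \<bar>P a n z\<bar>)) \<le> phi z * (indicator {..<c} z * \<bar>P a n z\<bar> - indicator {c..} z * P a n z)"
      by (intro mult_left_mono) auto
    then show "phi z * \<bar>P a n z\<bar> - 2 * (phi z * (indicator {c..} z * \<bar>P a n z\<bar>)) \<le> phi z * (indicator {..<c} z * \<bar>P a n z\<bar> - indicator {c..} z * P a n z)"
      by (simp add: algebra_simps)
  qed
  finally have "I - 2 * T \<le> Fd a" .
  moreover have "I - 2 * T \<ge> (1 - 2 * K) * I" using TK by (simp add: algebra_simps)
  moreover have "(1 - 2 * K) * I > 0" using Khalf I0 by simp
  ultimately show ?thesis by linarith
qed

lemma delta_exists: "\<exists>\<delta>>0. \<forall>a. \<delta> * (\<Sum>k=1..n. \<bar>a k\<bar>) \<le> Fd a"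
proof -
  define S1 where "S1 = Box n 1 \<inter> {a. (\<Sum>k=1..n. \<bar>a k\<bar>) = 1}"
  have cl: "closed {a::nat\<Rightarrow>real. (\<Sum>k=1..n. \<bar>a k\<bar>) = 1}"
    by (intro closed_Collect_eq continuous_intros continuous_on_product_coordinates)
  have cS1: "compact S1" unfolding S1_def by (intro compact_Int_closed compact_Box cl)
  define e1 where "e1 = (\<lambda>k::nat. if k = 1 then (1::real) else 0)"
  have "e1 \<in> Box n 1" unfolding Box_iff e1_def using n1 by auto
  moreover have "(\<Sum>k=1..n. \<bar>e1 k\<bar>) = 1"
  proof -
    have "(\<Sum>k=1..n. \<bar>e1 k\<bar>) = (\<Sum>k\<in>{1..n}. if k = 1 then 1 else 0)"
      by (intro sum.cong) (auto simp: e1_def)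
    also have "\<dots> = 1" using n1 by (subst sum.delta) auto
    finally show ?thesis .
  qed
  ultimately have "e1 \<in> S1" unfolding S1_def by simp
  then have ne: "S1 \<noteq> {}" by auto
  obtain b where b: "b \<in> S1" and bmin: "\<And>y. y \<in> S1 \<Longrightarrow> Fd b \<le> Fd y"
    using continuous_attains_inf[OF cS1 ne Fd_cont] by blast
  have "\<exists>k\<in>{1..n}. b k \<noteq> 0"
  proof (rule ccontr)
    assume "\<not> ?thesis"
    then have "(\<Sum>k=1..n. \<bar>b k\<bar>) = 0" by simp
    then show False using b unfolding S1_def by simp
  qed
  then obtain k where k: "k \<in> {1..n}" "b k \<noteq> 0" by blast
  have d0: "Fd b > 0" by (rule Fd_pos[of k b]) (use k in auto)
  have "\<forall>a. Fd b * (\<Sum>k=1..n. \<bar>a k\<bar>) \<le> Fd a"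
  proof
    fix a :: "nat \<Rightarrow> real"
    define N where "N = (\<Sum>k=1..n. \<bar>a k\<bar>)"
    have N0: "N \<ge> 0" unfolding N_def by (simp add: sum_nonneg)
    show "Fd b * (\<Sum>k=1..n. \<bar>a k\<bar>) \<le> Fd a"
    proof (cases "N = 0")
      case True
      then have "\<forall>k\<in>{1..n}. \<bar>a k\<bar> = 0" unfolding N_def
        using sum_nonneg_eq_0_iff[of "{1..n}" "\<lambda>k. \<bar>a k\<bar>"] by simp
      then have "\<And>k. k \<in> {1..n} \<Longrightarrow> a k = 0" by simp
      then have "Fd a = 0" by (rule Fd_zero)
      then show ?thesis using True unfolding N_def by simp
    next
      case False
      then have Np: "N > 0" using N0 by simp
      define a' where "a' = (\<lambda>k. if k \<in> {1..n} then a k / N else 0)"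
      have "a' \<in> S1"
      proof -
        have "\<bar>a k\<bar> \<le> N" if "k \<in> {1..n}" for k
          unfolding N_def using that by (intro member_le_sum) auto
        then have "a' \<in> Box n 1" unfolding Box_iff a'_def using Np by (auto simp: abs_divide)
        moreover have "(\<Sum>k=1..n. \<bar>a' k\<bar>) = 1"
        proof -
          have "(\<Sum>k=1..n. \<bar>a' k\<bar>) = (\<Sum>k=1..n. \<bar>a k\<bar> / N)"
            unfolding a'_def using Np by (intro sum.cong) (auto simp: abs_divide)
          also have "\<dots> = 1" using Np unfolding N_def[symmetric] sum_divide_distrib[symmetric] by simp
          finally show ?thesis .
        qed
        ultimately show ?thesis unfolding S1_def by simp
      qed
      then have "Fd b \<le> Fd a'" by (rule bmin)
      have "Fd a = Fd (\<lambda>k. N * a' k)" by (rule Fd_cong) (use Np in \<open>simp add: a'_def\<close>)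
      also have "\<dots> = N * Fd a'" using N0 by (rule Fd_scale)
      finally have "Fd a = N * Fd a'" .
      then show ?thesis using \<open>Fd b \<le> Fd a'\<close> N0 unfolding N_def[symmetric]
        by (simp add: mult.commute mult_left_mono)
    qed
  qed
  then show ?thesis using d0 by blast
qed

lemma Fd_le_Psi: "Fd a \<le> Psi a"
  unfolding Fd_def Psi_def
proof (rule integral_mono[OF Fd_int Psi_int])
  fix z
  show "phi z * (indicator {..<c} z * \<bar>P a n z\<bar> - indicator {c..} z * P a n z)
      \<le> phi z * (indicator {..<c} z * psi (P a n z) - indicator {c..} z * P a n z)"
    using psi_ge_abs[of "P a n z"] by (intro mult_left_mono) (auto simp: indicator_def)
qed

lemma minimizer: "\<exists>a0. \<forall>a. Psi a0 \<le> Psi a"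
proof -
  obtain d where d: "d > 0" "\<And>a. d * (\<Sum>k=1..n. \<bar>a k\<bar>) \<le> Fd a" using delta_exists by blast
  define z0 where "z0 = (\<lambda>k::nat. 0::real)"
  define R where "R = \<bar>Psi z0\<bar> / d"
  have R0: "R \<ge> 0" unfolding R_def using d by simp
  have z0B: "z0 \<in> Box n R" unfolding Box_iff z0_def using R0 by simp
  then have ne: "Box n R \<noteq> {}" by auto
  obtain a0 where a0: "a0 \<in> Box n R" and amin: "\<And>y. y \<in> Box n R \<Longrightarrow> Psi a0 \<le> Psi y"
    using continuous_attains_inf[OF compact_Box ne Psi_cont] by blast
  have "Psi a0 \<le> Psi a" for a
  proof -
    define a' where "a' = (\<lambda>k. if k \<in> {1..n} then a k else 0)"
    have eq: "Psi a = Psi a'" by (rule Psi_cong) (simp add: a'_def)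
    show ?thesis
    proof (cases "a' \<in> Box n R")
      case True
      then show ?thesis using amin eq by simp
    next
      case False
      then obtain k where k: "k \<in> {1..n}" "\<bar>a k\<bar> > R"
        unfolding Box_iff a'_def by (auto split: if_splits)
      have "\<bar>a k\<bar> \<le> (\<Sum>k=1..n. \<bar>a k\<bar>)" using k by (intro member_le_sum) auto
      then have "d * R < d * (\<Sum>k=1..n. \<bar>a k\<bar>)" using k d by simp
      also have "\<dots> \<le> Fd a" by (rule d)
      also have "\<dots> \<le> Psi a" by (rule Fd_le_Psi)
      finally have "\<bar>Psi z0\<bar> < Psi a" unfolding R_def using d by simp
      moreover have "Psi a0 \<le> Psi z0" by (rule amin[OF z0B])
      ultimately show ?thesis by simp
    qed
  qed
  then show ?thesis by blast
qed

lemma sigB_int: "integrable lborel (\<lambda>z. phi z * (indicator {..<c} z * sig (P a n z) * z ^ k - indicator {c..} z * z ^ k))"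
proof (rule integrable_phi_pb[where B = 1 and N = k])
  show "(\<lambda>z. indicator {..<c} z * sig (P a n z) * z ^ k - indicator {c..} z * z ^ k) \<in> borel_measurable borel"
    by measurable
  fix z
  have "\<bar>indicator {..<c} z * sig (P a n z) * z ^ k - indicator {c..} z * z ^ k\<bar> \<le> \<bar>z ^ k\<bar>"
  proof (cases "z < c")
    case True
    then have "\<bar>indicator {..<c} z * sig (P a n z) * z ^ k - indicator {c..} z * z ^ k\<bar> = \<bar>sig (P a n z)\<bar> * \<bar>z ^ k\<bar>"
      by (simp add: indicator_def abs_mult)
    also have "\<dots> \<le> 1 * \<bar>z ^ k\<bar>" using sig_abs by (intro mult_right_mono) auto
    finally show ?thesis by simp
  qed (simp add: indicator_def)
  then show "\<bar>indicator {..<c} z * sig (P a n z) * z ^ k - indicator {c..} z * z ^ k\<bar> \<le> 1 * (1 + \<bar>z\<bar> ^ k)"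
    using zk_bnd[of z k] by linarith
qed

lemma sq_int: "integrable lborel (\<lambda>z. phi z * (z ^ k * z ^ k / 2))"
proof (rule integrable_phi_pb[where B = 1 and N = "2 * k"])
  show "(\<lambda>z::real. z ^ k * z ^ k / 2) \<in> borel_measurable borel" by measurable
  fix z :: real
  have "\<bar>z ^ k * z ^ k / 2\<bar> \<le> \<bar>z\<bar> ^ (2 * k)"
    by (simp add: abs_mult power_abs power_mult[symmetric] mult_2[symmetric] power_add[symmetric] mult.commute)
  then show "\<bar>z ^ k * z ^ k / 2\<bar> \<le> 1 * (1 + \<bar>z\<bar> ^ (2 * k))" by simp
qed

lemma quad_zero:
  fixes D Q :: real
  assumes h: "\<And>t. 0 \<le> t * D + t\<^sup>2 * Q" and Q: "Q \<ge> 0"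
  shows "D = 0"
proof -
  define u where "u = 1 / (Q + 1)"
  have u0: "u > 0" unfolding u_def using Q by simp
  have uq: "u * Q = 1 - u" unfolding u_def using Q by (simp add: field_simps)
  have "(- D * u)\<^sup>2 * Q = D\<^sup>2 * u * (u * Q)" by (simp add: power2_eq_square mult_ac)
  also have "\<dots> = D\<^sup>2 * u - D\<^sup>2 * u * u" unfolding uq by (simp add: algebra_simps)
  finally have e: "(- D * u) * D + (- D * u)\<^sup>2 * Q = - (D * u)\<^sup>2"
    by (simp add: power2_eq_square algebra_simps)
  have "0 \<le> - (D * u)\<^sup>2" using h[of "- D * u"] unfolding e .
  then have "(D * u)\<^sup>2 = 0" using zero_le_power2[of "D * u"] by linarith
  then show ?thesis using u0 by simp
qed

lemma foc:
  assumes amin: "\<And>a. Psi a0 \<le> Psi a" and k: "k \<in> {1..n}"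
  shows "(\<integral>z. phi z * (indicator {..<c} z * sig (P a0 n z) * z ^ k - indicator {c..} z * z ^ k) \<partial>lborel) = 0"
proof -
  define D where "D = (\<integral>z. phi z * (indicator {..<c} z * sig (P a0 n z) * z ^ k - indicator {c..} z * z ^ k) \<partial>lborel)"
  define Q where "Q = (\<integral>z. phi z * (z ^ k * z ^ k / 2) \<partial>lborel)"
  have Q0: "Q \<ge> 0" unfolding Q_def
    by (intro Bochner_Integration.integral_nonneg mult_nonneg_nonneg divide_nonneg_nonneg zero_le_square) auto
  have "0 \<le> t * D + t\<^sup>2 * Q" for t
  proof -
    define aT where "aT = a0(k := a0 k + t)"
    have "Psi aT \<le> (\<integral>z. phi z * (indicator {..<c} z * psi (P a0 n z) - indicator {c..} z * P a0 n z)
        + t * (phi z * (indicator {..<c} z * sig (P a0 n z) * z ^ k - indicator {c..} z * z ^ k))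
        + t\<^sup>2 * (phi z * (z ^ k * z ^ k / 2)) \<partial>lborel)"
      unfolding Psi_def
    proof (rule integral_mono[OF Psi_int])
      show "integrable lborel (\<lambda>z. phi z * (indicator {..<c} z * psi (P a0 n z) - indicator {c..} z * P a0 n z)
        + t * (phi z * (indicator {..<c} z * sig (P a0 n z) * z ^ k - indicator {c..} z * z ^ k))
        + t\<^sup>2 * (phi z * (z ^ k * z ^ k / 2)))"
        by (intro Bochner_Integration.integrable_add Bochner_Integration.integrable_mult_right Psi_int sigB_int sq_int)
      fix z
      have Pt: "P aT n z = P a0 n z + t * z ^ k" unfolding aT_def by (rule P_upd[OF k])
      have q: "psi (P a0 n z + t * z ^ k) \<le> psi (P a0 n z) + sig (P a0 n z) * (t * z ^ k) + (t * z ^ k)\<^sup>2 / 2"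
        by (rule psi_quad)
      have "indicator {..<c} z * psi (P aT n z) - indicator {c..} z * P aT n z
          \<le> (indicator {..<c} z * psi (P a0 n z) - indicator {c..} z * P a0 n z)
            + t * (indicator {..<c} z * sig (P a0 n z) * z ^ k - indicator {c..} z * z ^ k)
            + t\<^sup>2 * (z ^ k * z ^ k / 2)"
      proof (cases "z < c")
        case True
        then show ?thesis using q unfolding Pt by (simp add: indicator_def power2_eq_square algebra_simps)
      next
        case False
        have "0 \<le> t\<^sup>2 * (z ^ k * z ^ k / 2)" by simp
        then show ?thesis using False unfolding Pt by (simp add: indicator_def algebra_simps)
      qed
      then have "phi z * (indicator {..<c} z * psi (P aT n z) - indicator {c..} z * P aT n z)
          \<le> phi z * ((indicator {..<c} z * psi (P a0 n z) - indicator {c..} z * P a0 n z)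
            + t * (indicator {..<c} z * sig (P a0 n z) * z ^ k - indicator {c..} z * z ^ k)
            + t\<^sup>2 * (z ^ k * z ^ k / 2))"
        by (intro mult_left_mono) auto
      then show "phi z * (indicator {..<c} z * psi (P aT n z) - indicator {c..} z * P aT n z)
          \<le> phi z * (indicator {..<c} z * psi (P a0 n z) - indicator {c..} z * P a0 n z)
            + t * (phi z * (indicator {..<c} z * sig (P a0 n z) * z ^ k - indicator {c..} z * z ^ k))
            + t\<^sup>2 * (phi z * (z ^ k * z ^ k / 2))"
        by (simp add: algebra_simps)
    qed
    also have "\<dots> = Psi a0 + t * D + t\<^sup>2 * Q"
    proof -
      have iA: "integrable lborel (\<lambda>z. phi z * (indicator {..<c} z * psi (P a0 n z) - indicator {c..} z * P a0 n z))"
        by (rule Psi_int)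
      have iB: "integrable lborel (\<lambda>z. t * (phi z * (indicator {..<c} z * sig (P a0 n z) * z ^ k - indicator {c..} z * z ^ k)))"
        by (rule Bochner_Integration.integrable_mult_right) (rule sigB_int)
      have iC: "integrable lborel (\<lambda>z. t\<^sup>2 * (phi z * (z ^ k * z ^ k / 2)))"
        by (rule Bochner_Integration.integrable_mult_right) (rule sq_int)
      have iAB: "integrable lborel (\<lambda>z. phi z * (indicator {..<c} z * psi (P a0 n z) - indicator {c..} z * P a0 n z)
          + t * (phi z * (indicator {..<c} z * sig (P a0 n z) * z ^ k - indicator {c..} z * z ^ k)))"
        by (rule Bochner_Integration.integrable_add[OF iA iB])
      show ?thesis unfolding Psi_def D_def Q_def
        by (simp only: Bochner_Integration.integral_add[OF iAB iC] Bochner_Integration.integral_add[OF iA iB]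
            integral_mult_right_zero)
    qed
    finally have "Psi aT \<le> Psi a0 + t * D + t\<^sup>2 * Q" .
    moreover have "Psi a0 \<le> Psi aT" by (rule amin)
    ultimately show ?thesis by simp
  qed
  then show ?thesis unfolding D_def[symmetric] using Q0 by (intro quad_zero) auto
qed

lemma exists_g:
  "\<exists>g. g \<in> borel_measurable borel \<and> (\<forall>z. -1 \<le> g z \<and> g z \<le> 1) \<and> (\<forall>z. c \<le> z \<longrightarrow> g z = 1) \<and>
     (\<forall>k\<in>{1..n}. integrable lborel (\<lambda>z. phi z * (g z * z ^ k)) \<and> (\<integral>z. phi z * (g z * z ^ k) \<partial>lborel) = 0)"
proof -
  obtain a0 where amin: "\<And>a. Psi a0 \<le> Psi a" using minimizer by blast
  define g where "g z = (if c \<le> z then 1 else - sig (P a0 n z))" for z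
  have gm: "g \<in> borel_measurable borel" unfolding g_def[abs_def] by measurable
  have gb: "-1 \<le> g z \<and> g z \<le> 1" for z using sig_abs[of "P a0 n z"] by (auto simp: g_def abs_le_iff)
  have g1: "c \<le> z \<longrightarrow> g z = 1" for z by (simp add: g_def)
  have gk: "integrable lborel (\<lambda>z. phi z * (g z * z ^ k)) \<and> (\<integral>z. phi z * (g z * z ^ k) \<partial>lborel) = 0"
    if k: "k \<in> {1..n}" for k
  proof
    have eq: "phi z * (g z * z ^ k) = - (phi z * (indicator {..<c} z * sig (P a0 n z) * z ^ k - indicator {c..} z * z ^ k))" for z
      by (simp add: g_def indicator_def)
    show "integrable lborel (\<lambda>z. phi z * (g z * z ^ k))"
      unfolding eq by (intro Bochner_Integration.integrable_minus sigB_int)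
    show "(\<integral>z. phi z * (g z * z ^ k) \<partial>lborel) = 0"
      unfolding eq Bochner_Integration.integral_minus foc[OF amin k] by simp
  qed
  show ?thesis using gm gb g1 gk by blast
qed

end


theorem lemma3p3:
  shows "\<exists>N::nat. \<forall>n\<ge>N. \<exists>g :: real \<Rightarrow> real.
           g \<in> borel_measurable borel \<and>
           (\<forall>z. -1 \<le> g z \<and> g z \<le> 1) \<and>
           (\<forall>z. z \<ge> Phi_inv (1 - 3 powi (- (2 * int n)) / 4) \<longrightarrow> g z = 1) \<and>
           (\<forall>k\<in>{1..n}. integrable std_normal (\<lambda>z. g z * z ^ k) \<and>
                        (\<integral>z. g z * z ^ k \<partial>std_normal) = 0)"
proof -
  obtain N1 where N1: "\<And>n. n \<ge> N1 \<Longrightarrow> Phi_inv (1 - (3::real) powi (- (2 * int n)) / 4) \<ge> 2 * sqrt (real n)"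
    using c_large by blast
  have "(\<lambda>n. (0.8712::real) ^ n) \<longlonglongrightarrow> 0" by (rule LIMSEQ_power_zero) simp
  from tendsto_mult[OF tendsto_const this, of 8]
  have lim: "(\<lambda>n. 8 * (0.8712::real) ^ n) \<longlonglongrightarrow> 0" by simp
  have "eventually (\<lambda>n. 8 * (0.8712::real) ^ n < 1/4) sequentially"
    using order_tendstoD(2)[OF lim, of "1/4"] by simp
  then obtain N2 where N2: "\<And>n. n \<ge> N2 \<Longrightarrow> 8 * (0.8712::real) ^ n < 1/4"
    by (auto simp: eventually_sequentially)
  define N where "N = max (max N1 N2) 1"
  have "\<forall>n\<ge>N. \<exists>g :: real \<Rightarrow> real.
           g \<in> borel_measurable borel \<and>
           (\<forall>z. -1 \<le> g z \<and> g z \<le> 1) \<and>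
           (\<forall>z. z \<ge> Phi_inv (1 - 3 powi (- (2 * int n)) / 4) \<longrightarrow> g z = 1) \<and>
           (\<forall>k\<in>{1..n}. integrable std_normal (\<lambda>z. g z * z ^ k) \<and>
                        (\<integral>z. g z * z ^ k \<partial>std_normal) = 0)"
  proof (intro allI impI)
    fix n assume nN: "N \<le> n"
    then have n1: "n \<ge> 1" and nN1: "n \<ge> N1" and nN2: "n \<ge> N2" unfolding N_def by auto
    define c where "c = Phi_inv (1 - (3::real) powi (- (2 * int n)) / 4)"
    have c2: "c \<ge> 2 * sqrt (real n)" unfolding c_def by (rule N1[OF nN1])
    have sq1: "sqrt (real n) \<ge> 1" using n1 by simp
    then have c0: "c > 0" using c2 by linarith
    have "(2 * sqrt (real n))\<^sup>2 \<le> c\<^sup>2" using c2 sq1 by (intro power_mono) auto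
    then have cn: "c\<^sup>2 \<ge> 4 * real n" by (simp add: power_mult_distrib)
    define K where "K = (\<Sum>i\<le>n. \<bar>Lam c n i\<bar> * exp (- tn c n i * c + (tn c n i)\<^sup>2 / 2))"
    have "K\<^sup>2 \<le> 8 * 0.8712 ^ n" unfolding K_def by (rule K_bound[OF c0 n1 cn])
    also have "\<dots> < 1/4" by (rule N2[OF nN2])
    finally have K2: "K\<^sup>2 < 1/4" .
    have Khalf: "K < 1/2"
    proof (rule ccontr)
      assume "\<not> K < 1/2"
      then have "(1/2)\<^sup>2 \<le> K\<^sup>2" by (intro power_mono) auto
      then show False using K2 by (simp add: power2_eq_square)
    qed
    have KI: "\<And>a. (\<integral>z. phi z * (indicator {c..} z * \<bar>P a n z\<bar>) \<partial>lborel) \<le> K * (\<integral>z. phi z * \<bar>P a n z\<bar> \<partial>lborel)"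
      unfolding K_def by (rule tail_bound[OF c0 n1])
    obtain g where gm: "g \<in> borel_measurable borel" and gb: "\<forall>z. -1 \<le> g z \<and> g z \<le> 1"
      and g1: "\<forall>z. c \<le> z \<longrightarrow> g z = 1"
      and gk: "\<forall>k\<in>{1..n}. integrable lborel (\<lambda>z. phi z * (g z * z ^ k)) \<and> (\<integral>z. phi z * (g z * z ^ k) \<partial>lborel) = 0"
      using exists_g[OF n1 KI Khalf] by blast
    have "\<forall>k\<in>{1..n}. integrable std_normal (\<lambda>z. g z * z ^ k) \<and> (\<integral>z. g z * z ^ k \<partial>std_normal) = 0"
    proof
      fix k assume k: "k \<in> {1..n}"
      have m: "(\<lambda>z. g z * z ^ k) \<in> borel_measurable lborel" using gm by measurable
      have "integrable std_normal (\<lambda>z. g z * z ^ k) \<longleftrightarrow> integrable lborel (\<lambda>z. phi z *\<^sub>R (g z * z ^ k))"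
        unfolding std_normal_def by (rule integrable_density) (use m in auto)
      then have "integrable std_normal (\<lambda>z. g z * z ^ k)" using gk k by simp
      moreover have "(\<integral>z. g z * z ^ k \<partial>std_normal) = (\<integral>z. phi z *\<^sub>R (g z * z ^ k) \<partial>lborel)"
        unfolding std_normal_def by (rule integral_density) (use m in auto)
      then have "(\<integral>z. g z * z ^ k \<partial>std_normal) = 0" using gk k by simp
      ultimately show "integrable std_normal (\<lambda>z. g z * z ^ k) \<and> (\<integral>z. g z * z ^ k \<partial>std_normal) = 0" by blast
    qed
    then show "\<exists>g :: real \<Rightarrow> real.
           g \<in> borel_measurable borel \<and>
           (\<forall>z. -1 \<le> g z \<and> g z \<le> 1) \<and>
           (\<forall>z. z \<ge> Phi_inv (1 - 3 powi (- (2 * int n)) / 4) \<longrightarrow> g z = 1) \<and>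
           (\<forall>k\<in>{1..n}. integrable std_normal (\<lambda>z. g z * z ^ k) \<and>
                        (\<integral>z. g z * z ^ k \<partial>std_normal) = 0)"
      using gm gb g1 unfolding c_def by blast
  qed
  then show ?thesis by blast
qed

end
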